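(* Let $n \ge 3$, $k \in [1, n-2]$, $\beta > 1$, and let $\alpha = (3, 1, \ldots, 1, \beta, 1, \ldots, 1)$ be the composition of length $n-1$ with first entry $3$, entry $\beta$ in position $k+1$, and all other entries $1$. Then for every prime $p$: (1) if $\beta = 2$, \begin{align*} g_\alpha(p) &= (n-1)p^{2n-k-5} + (n-k-1)(n-2) p^{n-3} (p-1)- (n-k-1)p^{n-3} \\ &\quad+\left((n-k-2) + \binom{n-k-2}{2}\right)p^{n-3}(p-2)(p-3); \end{align*} (2) if $\beta > 2$, \begin{align*} g_\alpha(p) &= (n-k-1)(n-2) p^{2n-k-5} + \big((n-k-1)(k-1) + 1 + (n-k-2)(n-k-3)\big) p^{n-3} (p-1) \\ &\quad+(n-k-2)p^{n-3}(p-1)^2 + (n-k-2)p^{n-2} (p-1) + (n-k-2)(n-k-3)p^{n-3}(p-1)(p-2). \end{align*}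
   Context: For a composition $\alpha=(e_1,\ldots,e_{n-1})$ (positive integers), $g_\alpha(p)$ is the number of $n\times n$ irreducible subring matrices with diagonal $(p^{e_1},\ldots,p^{e_{n-1}},1)$: upper triangular integer matrices $A$ with $A_{rr}=p^{e_r}$ ($r<n$), $A_{nn}=1$, last column $(1,\ldots,1)^T$, entries $A_{rs}=p\,a_{rs}$ for $1\le r<s\le n-1$ with integers $0\le p\,a_{rs}<p^{e_r}$, such that for all columns $v_i,v_j$ of $A$ the componentwise product $v_i\circ v_j$ lies in the $\mathbb{Z}$-column span of $A$. Binomial coefficients $\binom{m}{2}$ with $m<2$ are $0$. *)

theory Defs
  imports Main "HOL-Computational_Algebra.Primes"
begin

text \<open>Matrices are functions nat => nat => int with 0-based indices 0..n-1
  (row r, column s); entries outside the n x n range are required to be 0.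
  A composition (e_1,...,e_(n-1)) is a list e of length n-1, so n = length e + 1.\<close>

definition col :: "(nat \<Rightarrow> nat \<Rightarrow> int) \<Rightarrow> nat \<Rightarrow> nat \<Rightarrow> int" where
  "col A j = (\<lambda>r. A r j)"

definition in_col_span :: "nat \<Rightarrow> (nat \<Rightarrow> nat \<Rightarrow> int) \<Rightarrow> (nat \<Rightarrow> int) \<Rightarrow> bool" where
  "in_col_span n A v \<longleftrightarrow> (\<exists>c :: nat \<Rightarrow> int. \<forall>r<n. v r = (\<Sum>j<n. c j * A r j))"

definition irr_subring_matrices :: "nat list \<Rightarrow> nat \<Rightarrow> (nat \<Rightarrow> nat \<Rightarrow> int) set" where
  "irr_subring_matrices e p =
    (let n = length e + 1 in
     {A. (\<forall>i j. (n \<le> i \<or> n \<le> j) \<longrightarrow> A i j = 0)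
       \<and> (\<forall>i j. j < i \<longrightarrow> A i j = 0)
       \<and> (\<forall>r < n - 1. A r r = int p ^ (e ! r))
       \<and> A (n - 1) (n - 1) = 1
       \<and> (\<forall>r < n. A r (n - 1) = 1)
       \<and> (\<forall>r s. r < s \<and> s < n - 1 \<longrightarrow>
              (\<exists>a :: int. A r s = int p * a) \<and> 0 \<le> A r s \<and> A r s < int p ^ (e ! r))
       \<and> (\<forall>i<n. \<forall>j<n. in_col_span n A (\<lambda>r. col A i r * col A j r))})"

definition g :: "nat list \<Rightarrow> nat \<Rightarrow> nat" where
  "g e p = card (irr_subring_matrices e p)"

end

theory Submission
  imports Defs "HOL-Library.FuncSet"
begin

definition ext :: "nat set \<Rightarrow> int set \<Rightarrow> (nat \<Rightarrow> int) set" where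
  "ext I D = {f. (\<forall>i\<in>I. f i \<in> D) \<and> (\<forall>i. i \<notin> I \<longrightarrow> f i = 0)}"

definition extd :: "nat set \<Rightarrow> (nat \<Rightarrow> int set) \<Rightarrow> (nat \<Rightarrow> int) set" where
  "extd I D = {f. (\<forall>i\<in>I. f i \<in> D i) \<and> (\<forall>i. i \<notin> I \<longrightarrow> f i = 0)}"

lemma card_extd:
  assumes "finite I"
  shows "card (extd I D) = (\<Prod>i\<in>I. card (D i))"
proof -
  have "bij_betw (\<lambda>f. restrict f I) (extd I D) (PiE I D)"
  proof (rule bij_betw_byWitness[where f' = "\<lambda>g x. if x \<in> I then g x else 0"])
    show "\<forall>a\<in>extd I D. (\<lambda>x. if x \<in> I then restrict a I x else 0) = a"
      by (auto simp: extd_def fun_eq_iff)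
    show "\<forall>a'\<in>PiE I D. restrict (\<lambda>x. if x \<in> I then a' x else 0) I = a'"
      by (auto simp: fun_eq_iff PiE_def extensional_def)
    show "(\<lambda>f. restrict f I) ` extd I D \<subseteq> PiE I D"
      by (auto simp: extd_def)
    show "(\<lambda>g x. if x \<in> I then g x else 0) ` PiE I D \<subseteq> extd I D"
      by (auto simp: extd_def)
  qed
  hence "card (extd I D) = card (PiE I D)" by (rule bij_betw_same_card)
  also have "\<dots> = (\<Prod>i\<in>I. card (D i))" using assms by (rule card_PiE)
  finally show ?thesis .
qed

lemma ext_extd: "ext I D = extd I (\<lambda>_. D)"
  by (simp add: ext_def extd_def)

lemma card_ext:
  assumes "finite I"
  shows "card (ext I D) = card D ^ card I"
  using card_extd[OF assms, of "\<lambda>_. D"] by (simp add: ext_extd)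

locale L =
  fixes n k \<beta> p :: nat
  assumes n3: "n \<ge> 3" and k1: "1 \<le> k" and kn: "k \<le> n - 2" and b1: "\<beta> > 1"
    and pp: "prime p"
begin

abbreviation "P \<equiv> int p"

definition al :: "nat list" where
  "al = [3] @ replicate (k - 1) 1 @ [\<beta>] @ replicate (n - k - 2) 1"

definition ee :: "nat \<Rightarrow> nat" where
  "ee r = (if r = 0 then 3 else if r = k then \<beta> else 1)"

lemma len_al: "length al = n - 1"
  using n3 k1 kn by (simp add: al_def)

lemma nth_al: "r < n - 1 \<Longrightarrow> al ! r = ee r"
proof -
  assume r: "r < n - 1"
  show ?thesis
  proof (cases "r = 0")
    case True thus ?thesis by (simp add: al_def ee_def)
  next
    case False
    then obtain r' where r': "r = Suc r'" by (cases r) auto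
    have "al ! r = (replicate (k - 1) 1 @ [\<beta>] @ replicate (n - k - 2) 1) ! r'"
      by (simp add: al_def r')
    also have "\<dots> = ee r"
      using r r' k1 kn
      by (auto simp: nth_append ee_def)
    finally show ?thesis .
  qed
qed

lemma P_pos: "P > 1" using pp prime_gt_1_nat by auto
lemma Pprime: "prime P" using pp by simp

definition R :: "nat set" where "R = {1..<n-1} - {k}"
definition Sg :: "nat set" where "Sg = {k+1..<n-1}"
definition I1 :: "nat set" where "I1 = {1..<n-1}"

lemma finR: "finite R" by (simp add: R_def)
lemma finSg: "finite Sg" by (simp add: Sg_def)

lemma cover: "r < n \<Longrightarrow> r = 0 \<or> r = k \<or> r = n - 1 \<or> r \<in> R"
  by (auto simp: R_def)

lemma lessn_split: "{..<n} = insert 0 (insert k (insert (n - 1) R))"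
  using n3 k1 kn by (auto simp: R_def)

lemma sum_split: "(\<Sum>j<n. f j) = f 0 + f k + f (n - 1) + (\<Sum>j\<in>R. f j)"
proof -
  have "0 \<notin> insert k (insert (n - 1) R)" using n3 k1 kn by (auto simp: R_def)
  moreover have "k \<notin> insert (n - 1) R" using n3 k1 kn by (auto simp: R_def)
  moreover have "n - 1 \<notin> R" by (auto simp: R_def)
  ultimately show ?thesis
    by (simp add: lessn_split finR add.assoc)
qed

definition Mx :: "(nat \<Rightarrow> int) \<Rightarrow> (nat \<Rightarrow> int) \<Rightarrow> nat \<Rightarrow> nat \<Rightarrow> int" where
  "Mx a b r s = (if r < n \<and> s < n then (if s = n - 1 then 1 else if r = s then P ^ ee r
      else if r = 0 then P * a s else if r = k then P * b s else 0) else 0)"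

lemma kR: "k \<notin> R" "0 \<notin> R" "n - 1 \<notin> R" by (auto simp: R_def)
lemma Rlt: "r \<in> R \<Longrightarrow> r < n - 1 \<and> r \<noteq> 0 \<and> r \<noteq> k" by (auto simp: R_def)
lemma kbounds: "0 < k" "k < n - 1" "k < n" "0 < n - 1" using k1 kn n3 by auto

lemma rs_n1: "(\<Sum>j<n. c j * Mx a b (n - 1) j) = c (n - 1)"
proof -
  have "\<And>j. j < n \<Longrightarrow> Mx a b (n - 1) j = (if j = n - 1 then 1 else 0)"
    using kbounds by (auto simp: Mx_def ee_def)
  hence "(\<Sum>j<n. c j * Mx a b (n - 1) j) = (\<Sum>j<n. if j = n - 1 then c j else 0)"
    by (intro sum.cong) auto
  also have "\<dots> = c (n - 1)" using kbounds by (simp add: sum.delta)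
  finally show ?thesis .
qed

lemma rs_R: assumes "r \<in> R" shows "(\<Sum>j<n. c j * Mx a b r j) = P * c r + c (n - 1)"
proof -
  have rn: "r < n" using Rlt[OF assms] by auto
  have n1: "n - 1 < n" using kbounds by simp
  have "\<And>j. j < n \<Longrightarrow> c j * Mx a b r j = (if j = n - 1 then c j else 0) + (if j = r then P * c j else 0)"
    using kbounds Rlt[OF assms] by (auto simp: Mx_def ee_def)
  hence "(\<Sum>j<n. c j * Mx a b r j) = (\<Sum>j<n. (if j = n - 1 then c j else 0) + (if j = r then P * c j else 0))"
    by (intro sum.cong) auto
  also have "\<dots> = (\<Sum>j<n. (if j = n - 1 then c j else 0)) + (\<Sum>j<n. (if j = r then P * c j else 0))"
    by (rule sum.distrib)
  also have "\<dots> = c (n - 1) + P * c r" using rn n1 by (simp only: sum.delta finite_lessThan lessThan_iff if_True)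
  finally show ?thesis by simp
qed

lemma rs_k: assumes "b 0 = 0"
  shows "(\<Sum>j<n. c j * Mx a b k j) = c (n - 1) + P ^ \<beta> * c k + P * (\<Sum>j\<in>R. b j * c j)"
proof -
  have "(\<Sum>j<n. c j * Mx a b k j) = c 0 * Mx a b k 0 + c k * Mx a b k k + c (n - 1) * Mx a b k (n - 1)
     + (\<Sum>j\<in>R. c j * Mx a b k j)" by (rule sum_split)
  also have "(\<Sum>j\<in>R. c j * Mx a b k j) = (\<Sum>j\<in>R. P * (b j * c j))"
    using kbounds by (intro sum.cong) (auto simp: Mx_def R_def)
  finally show ?thesis using kbounds assms by (simp add: Mx_def ee_def sum_distrib_left)
qed

lemma rs_0:
  shows "(\<Sum>j<n. c j * Mx a b 0 j) = c (n - 1) + P ^ 3 * c 0 + P * a k * c k + P * (\<Sum>j\<in>R. a j * c j)"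
proof -
  have "(\<Sum>j<n. c j * Mx a b 0 j) = c 0 * Mx a b 0 0 + c k * Mx a b 0 k + c (n - 1) * Mx a b 0 (n - 1)
     + (\<Sum>j\<in>R. c j * Mx a b 0 j)" by (rule sum_split)
  also have "(\<Sum>j\<in>R. c j * Mx a b 0 j) = (\<Sum>j\<in>R. P * (a j * c j))"
    by (intro sum.cong) (auto simp: Mx_def R_def)
  finally show ?thesis using kbounds by (simp add: Mx_def ee_def sum_distrib_left)
qed

lemma span_char:
  assumes b0: "b 0 = 0" and w1: "w (n - 1) = 0"
  shows "in_col_span n (Mx a b) w \<longleftrightarrow> (\<forall>r\<in>R. P dvd w r) \<and>
     (\<exists>ck c0. w k = P ^ \<beta> * ck + (\<Sum>j\<in>R. b j * w j) \<and> w 0 = P ^ 3 * c0 + P * a k * ck + (\<Sum>j\<in>R. a j * w j))"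
proof
  assume "in_col_span n (Mx a b) w"
  then obtain c where c: "\<forall>r<n. w r = (\<Sum>j<n. c j * Mx a b r j)" by (auto simp: in_col_span_def)
  have F: "w (n - 1) = (\<Sum>j<n. c j * Mx a b (n - 1) j)" using kbounds by (intro c[rule_format]) simp
  have cn: "c (n - 1) = 0" using F w1 rs_n1[of c a b] by linarith
  have cR: "w r = P * c r" if rR: "r \<in> R" for r
  proof -
    have "r < n" using Rlt[OF rR] by auto
    hence "w r = (\<Sum>j<n. c j * Mx a b r j)" using c by blast
    thus ?thesis using rs_R[OF rR, of c a b] cn by simp
  qed
  have "w k = P ^ \<beta> * c k + P * (\<Sum>j\<in>R. b j * c j)"
    using c[rule_format, of k] kbounds cn rs_k[where b=b, OF b0] by simp
  moreover have "(\<Sum>j\<in>R. b j * w j) = P * (\<Sum>j\<in>R. b j * c j)"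
    by (simp add: cR sum_distrib_left mult.left_commute)
  moreover have "w 0 = P ^ 3 * c 0 + P * a k * c k + P * (\<Sum>j\<in>R. a j * c j)"
    using c[rule_format, of 0] kbounds cn rs_0 by simp
  moreover have "(\<Sum>j\<in>R. a j * w j) = P * (\<Sum>j\<in>R. a j * c j)"
    by (simp add: cR sum_distrib_left mult.left_commute)
  ultimately show "(\<forall>r\<in>R. P dvd w r) \<and>
     (\<exists>ck c0. w k = P ^ \<beta> * ck + (\<Sum>j\<in>R. b j * w j) \<and> w 0 = P ^ 3 * c0 + P * a k * ck + (\<Sum>j\<in>R. a j * w j))"
    using cR by auto
next
  assume "(\<forall>r\<in>R. P dvd w r) \<and>
     (\<exists>ck c0. w k = P ^ \<beta> * ck + (\<Sum>j\<in>R. b j * w j) \<and> w 0 = P ^ 3 * c0 + P * a k * ck + (\<Sum>j\<in>R. a j * w j))"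
  then obtain ck c0 where dv: "\<forall>r\<in>R. P dvd w r" and
    hk: "w k = P ^ \<beta> * ck + (\<Sum>j\<in>R. b j * w j)" and h0: "w 0 = P ^ 3 * c0 + P * a k * ck + (\<Sum>j\<in>R. a j * w j)"
    by blast
  define c where "c r = (if r \<in> R then w r div P else if r = k then ck else if r = 0 then c0 else 0)" for r
  have cR: "\<And>r. r \<in> R \<Longrightarrow> w r = P * c r" using dv by (auto simp: c_def)
  have cn: "c (n - 1) = 0" using kR(3) kbounds by (simp add: c_def)
  have ck: "c k = ck" using kR by (simp add: c_def)
  have c0: "c 0 = c0" using kR kbounds by (simp add: c_def)
  have sb: "(\<Sum>j\<in>R. b j * w j) = P * (\<Sum>j\<in>R. b j * c j)"
    by (simp add: cR sum_distrib_left mult.left_commute)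
  have sa: "(\<Sum>j\<in>R. a j * w j) = P * (\<Sum>j\<in>R. a j * c j)"
    by (simp add: cR sum_distrib_left mult.left_commute)
  have "\<forall>r<n. w r = (\<Sum>j<n. c j * Mx a b r j)"
  proof (intro allI impI)
    fix r assume "r < n"
    then consider "r = 0" | "r = k" | "r = n - 1" | "r \<in> R" using cover by blast
    thus "w r = (\<Sum>j<n. c j * Mx a b r j)"
    proof cases
      case 1 thus ?thesis using h0 rs_0 cn ck c0 sa by simp
    next
      case 2 thus ?thesis using hk rs_k[where b=b, OF b0] cn ck sb by simp
    next
      case 3 thus ?thesis using rs_n1 cn w1 by simp
    next
      case 4 thus ?thesis using rs_R cR cn by simp
    qed
  qed
  thus "in_col_span n (Mx a b) w" by (auto simp: in_col_span_def)
qed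

lemma span_multiple:
  assumes "m < n" "\<forall>r<n. w r = t * A r m"
  shows "in_col_span n A w"
proof -
  have e: "(\<Sum>j<n. (if j = m then t else 0) * A r j) = t * A r m" for r
  proof -
    have "(\<Sum>j<n. (if j = m then t else 0) * A r j) = (\<Sum>j<n. if j = m then t * A r j else 0)"
      by (rule sum.cong) auto
    also have "\<dots> = t * A r m" using assms(1) by simp
    finally show ?thesis .
  qed
  have "\<forall>r<n. w r = (\<Sum>j<n. (if j = m then t else 0) * A r j)"
    using assms(2) e by simp
  thus ?thesis unfolding in_col_span_def by (intro exI[of _ "\<lambda>j. if j = m then t else 0"])
qed

definition Mk :: "(nat \<Rightarrow> int) \<Rightarrow> nat \<Rightarrow> int" where
  "Mk b i = (if i = k then P ^ \<beta> else P * b i)"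

definition condA :: "(nat \<Rightarrow> int) \<Rightarrow> (nat \<Rightarrow> int) \<Rightarrow> nat \<Rightarrow> nat \<Rightarrow> bool" where
  "condA a b i j \<longleftrightarrow> (\<exists>ck c0. Mk b i * Mk b j = P ^ \<beta> * ck + (if i = j \<and> i \<in> R then P ^ 2 * b i else 0)
     \<and> (P * a i) * (P * a j) = P ^ 3 * c0 + P * a k * ck + (if i = j \<and> i \<in> R then P ^ 2 * a i else 0))"

lemma I1_props: "i \<in> I1 \<Longrightarrow> 0 < i \<and> i < n - 1 \<and> i < n" by (auto simp: I1_def)

lemma prod_span:
  assumes i: "i \<in> I1" and j: "j \<in> I1" and b0: "b 0 = 0"
  shows "in_col_span n (Mx a b) (\<lambda>r. col (Mx a b) i r * col (Mx a b) j r) \<longleftrightarrow> condA a b i j"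
proof -
  define w where "w = (\<lambda>r. col (Mx a b) i r * col (Mx a b) j r)"
  have w1: "w (n - 1) = 0" using I1_props[OF i] I1_props[OF j] kbounds
    by (auto simp: w_def col_def Mx_def ee_def)
  have wR: "w r = (if r = i \<and> r = j then P ^ 2 else 0)" if "r \<in> R" for r
    using Rlt[OF that] I1_props[OF i] I1_props[OF j] kbounds
    by (auto simp: w_def col_def Mx_def ee_def power2_eq_square)
  have wk: "w k = Mk b i * Mk b j" using I1_props[OF i] I1_props[OF j] kbounds
    by (auto simp: w_def col_def Mx_def ee_def Mk_def)
  have w0: "w 0 = (P * a i) * (P * a j)" using I1_props[OF i] I1_props[OF j] kbounds
    by (auto simp: w_def col_def Mx_def ee_def)
  have sb: "(\<Sum>r\<in>R. b r * w r) = (if i = j \<and> i \<in> R then P ^ 2 * b i else 0)"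
  proof -
    have "(\<Sum>r\<in>R. b r * w r) = (\<Sum>r\<in>R. if r = i then (if i = j then P ^ 2 * b i else 0) else 0)"
      by (intro sum.cong) (auto simp: wR)
    also have "\<dots> = (if i = j \<and> i \<in> R then P ^ 2 * b i else 0)" using finR by (simp add: sum.delta)
    finally show ?thesis .
  qed
  have sa: "(\<Sum>r\<in>R. a r * w r) = (if i = j \<and> i \<in> R then P ^ 2 * a i else 0)"
  proof -
    have "(\<Sum>r\<in>R. a r * w r) = (\<Sum>r\<in>R. if r = i then (if i = j then P ^ 2 * a i else 0) else 0)"
      by (intro sum.cong) (auto simp: wR)
    also have "\<dots> = (if i = j \<and> i \<in> R then P ^ 2 * a i else 0)" using finR by (simp add: sum.delta)
    finally show ?thesis .
  qed
  have dv: "\<forall>r\<in>R. P dvd w r" using wR by (auto simp: power2_eq_square)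
  show ?thesis
    unfolding w_def[symmetric] span_char[where a=a and b=b and w=w, OF b0 w1] condA_def
    using dv sb sa wk w0 by simp
qed

definition Da :: "(nat \<Rightarrow> int) set" where "Da = ext I1 {0..<P ^ 2}"
definition Db :: "(nat \<Rightarrow> int) set" where "Db = ext Sg {0..<P ^ (\<beta> - 1)}"

lemma Db0: "b \<in> Db \<Longrightarrow> i \<notin> Sg \<Longrightarrow> b i = 0" by (auto simp: Db_def ext_def)
lemma Da0: "a \<in> Da \<Longrightarrow> i \<notin> I1 \<Longrightarrow> a i = 0" by (auto simp: Da_def ext_def)

lemma all_prod_span:
  assumes a: "a \<in> Da" and b: "b \<in> Db"
  shows "(\<forall>i<n. \<forall>j<n. in_col_span n (Mx a b) (\<lambda>r. col (Mx a b) i r * col (Mx a b) j r))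
     \<longleftrightarrow> (\<forall>i\<in>I1. \<forall>j\<in>I1. condA a b i j)"
proof
  have b0: "b 0 = 0" using Db0[OF b] by (auto simp: Sg_def)
  assume "\<forall>i<n. \<forall>j<n. in_col_span n (Mx a b) (\<lambda>r. col (Mx a b) i r * col (Mx a b) j r)"
  thus "\<forall>i\<in>I1. \<forall>j\<in>I1. condA a b i j"
    using prod_span[where a=a and b=b, OF _ _ b0] I1_props by blast
next
  have b0: "b 0 = 0" using Db0[OF b] by (auto simp: Sg_def)
  assume H: "\<forall>i\<in>I1. \<forall>j\<in>I1. condA a b i j"
  have one: "in_col_span n (Mx a b) (\<lambda>r. col (Mx a b) i r * col (Mx a b) j r)"
    if "i < n" "j < n" "i = n - 1" for i j
    by (rule span_multiple[where m = j and t = 1]) (use that in \<open>auto simp: col_def Mx_def\<close>)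
  have zero: "in_col_span n (Mx a b) (\<lambda>r. col (Mx a b) i r * col (Mx a b) j r)"
    if "i < n" "j < n" "i = 0" "j \<noteq> n - 1" for i j
    by (rule span_multiple[where m = 0 and t = "Mx a b 0 j"]) (use that kbounds b0 in \<open>auto simp: col_def Mx_def ee_def\<close>)
  show "\<forall>i<n. \<forall>j<n. in_col_span n (Mx a b) (\<lambda>r. col (Mx a b) i r * col (Mx a b) j r)"
  proof (intro allI impI)
    fix i j assume ij: "i < n" "j < n"
    show "in_col_span n (Mx a b) (\<lambda>r. col (Mx a b) i r * col (Mx a b) j r)"
    proof (cases "i = n - 1 \<or> j = n - 1")
      case True
      thus ?thesis using one[OF ij] one[OF ij(2,1)] by (auto simp: mult.commute)
    next
      case False
      show ?thesis
      proof (cases "i = 0 \<or> j = 0")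
        case True
        thus ?thesis using zero[OF ij] zero[OF ij(2,1)] False by (auto simp: mult.commute)
      next
        case False2: False
        have "i \<in> I1" "j \<in> I1" using ij False False2 by (auto simp: I1_def)
        thus ?thesis using prod_span[where a=a and b=b, OF _ _ b0] H by blast
      qed
    qed
  qed
qed

lemma irr_unfold:
  "irr_subring_matrices al p =
    {A. (\<forall>i j. (n \<le> i \<or> n \<le> j) \<longrightarrow> A i j = 0)
       \<and> (\<forall>i j. j < i \<longrightarrow> A i j = 0)
       \<and> (\<forall>r < n - 1. A r r = P ^ ee r)
       \<and> A (n - 1) (n - 1) = 1
       \<and> (\<forall>r < n. A r (n - 1) = 1)
       \<and> (\<forall>r s. r < s \<and> s < n - 1 \<longrightarrow>
              (\<exists>a :: int. A r s = P * a) \<and> 0 \<le> A r s \<and> A r s < P ^ ee r)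
       \<and> (\<forall>i<n. \<forall>j<n. in_col_span n A (\<lambda>r. col A i r * col A j r))}"
proof -
  have nn: "length al + 1 = n" using len_al kbounds by simp
  show ?thesis unfolding irr_subring_matrices_def Let_def nn
    using nth_al by (intro Collect_cong) (auto)
qed

lemma shape_Mx:
  assumes a: "a \<in> Da" and b: "b \<in> Db"
  shows "(\<forall>i j. (n \<le> i \<or> n \<le> j) \<longrightarrow> Mx a b i j = 0)
       \<and> (\<forall>i j. j < i \<longrightarrow> Mx a b i j = 0)
       \<and> (\<forall>r < n - 1. Mx a b r r = P ^ ee r)
       \<and> Mx a b (n - 1) (n - 1) = 1
       \<and> (\<forall>r < n. Mx a b r (n - 1) = 1)
       \<and> (\<forall>r s. r < s \<and> s < n - 1 \<longrightarrow>
              (\<exists>c :: int. Mx a b r s = P * c) \<and> 0 \<le> Mx a b r s \<and> Mx a b r s < P ^ ee r)"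
proof (intro conjI allI impI)
  fix i j :: nat assume "j < i"
  thus "Mx a b i j = 0" using Db0[OF b, of j] kbounds by (auto simp: Mx_def Sg_def)
next
  fix r s :: nat assume rs: "r < s \<and> s < n - 1"
  have Pp: "P > 0" using P_pos by simp
  show "\<exists>c. Mx a b r s = P * c"
    using rs by (auto simp: Mx_def)
  have ab: "0 \<le> a s \<and> a s < P ^ 2" if "r = 0"
    using a rs that by (auto simp: Da_def ext_def I1_def)
  have bb: "0 \<le> b s \<and> b s < P ^ (\<beta> - 1)" if "r = k"
    using b rs that by (auto simp: Db_def ext_def Sg_def)
  show "0 \<le> Mx a b r s" using rs ab bb Pp by (auto simp: Mx_def)
  have e1: "P * P ^ (\<beta> - 1) = P ^ \<beta>" using b1 by (simp add: power_eq_if[of P \<beta>])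
  have e2: "P * P ^ 2 = P ^ 3" by (simp add: power_eq_if)
  have sn: "s \<noteq> n - 1" "s < n" "r \<noteq> s" using rs by auto
  show "Mx a b r s < P ^ ee r"
  proof (cases "r = 0")
    case True
    have "P * a s < P * P ^ 2" by (rule mult_strict_left_mono) (use ab True Pp in auto)
    thus ?thesis using True sn e2 by (simp add: Mx_def ee_def)
  next
    case r0: False
    show ?thesis
    proof (cases "r = k")
      case True
      have "P * b s < P * P ^ (\<beta> - 1)" by (rule mult_strict_left_mono) (use bb True Pp in auto)
      thus ?thesis using True sn e1 r0 kbounds by (simp add: Mx_def ee_def)
    next
      case False thus ?thesis using r0 sn Pp by (simp add: Mx_def ee_def)
    qed
  qed
qed (use kbounds in \<open>auto simp: Mx_def ee_def\<close>)

lemma inj_Mx: "inj_on (\<lambda>(a, b). Mx a b) (Da \<times> Db)"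
proof (rule inj_onI, clarsimp)
  fix a b a' b' assume a: "a \<in> Da" "a' \<in> Da" and b: "b \<in> Db" "b' \<in> Db" and eq: "Mx a b = Mx a' b'"
  have Pn: "P \<noteq> 0" using P_pos by simp
  show "a = a' \<and> b = b'"
  proof
    show "a = a'"
    proof
      fix s show "a s = a' s"
      proof (cases "s \<in> I1")
        case True
        have "Mx a b 0 s = Mx a' b' 0 s" using eq by simp
        thus ?thesis using True I1_props[OF True] Pn by (simp add: Mx_def)
      next
        case False thus ?thesis using Da0 a by metis
      qed
    qed
    show "b = b'"
    proof
      fix s show "b s = b' s"
      proof (cases "s \<in> Sg")
        case True
        have "Mx a b k s = Mx a' b' k s" using eq by simp
        moreover have "s \<noteq> n - 1" "s \<noteq> k" "s < n" "k \<noteq> s" "k < n" "k \<noteq> 0" using True kbounds by (auto simp: Sg_def)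
        ultimately show ?thesis using Pn by (simp add: Mx_def)
      next
        case False thus ?thesis using Db0 b by metis
      qed
    qed
  qed
qed

definition PA :: "((nat \<Rightarrow> int) \<times> (nat \<Rightarrow> int)) set" where
  "PA = {(a, b). a \<in> Da \<and> b \<in> Db \<and> (\<forall>i\<in>I1. \<forall>j\<in>I1. condA a b i j)}"

lemma irr_image: "irr_subring_matrices al p = (\<lambda>(a, b). Mx a b) ` PA"
proof
  show "(\<lambda>(a, b). Mx a b) ` PA \<subseteq> irr_subring_matrices al p"
  proof
    fix A assume "A \<in> (\<lambda>(a, b). Mx a b) ` PA"
    then obtain a b where A: "A = Mx a b" and ab: "a \<in> Da" "b \<in> Db" "\<forall>i\<in>I1. \<forall>j\<in>I1. condA a b i j"
      by (auto simp: PA_def)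
    show "A \<in> irr_subring_matrices al p"
      unfolding irr_unfold A using shape_Mx[OF ab(1,2)] all_prod_span[OF ab(1,2)] ab(3)
      by (simp only: mem_Collect_eq) blast
  qed
next
  show "irr_subring_matrices al p \<subseteq> (\<lambda>(a, b). Mx a b) ` PA"
  proof
    fix A assume "A \<in> irr_subring_matrices al p"
    hence h1: "\<forall>i j. (n \<le> i \<or> n \<le> j) \<longrightarrow> A i j = 0"
       and h2: "\<forall>i j. j < i \<longrightarrow> A i j = 0"
       and h3: "\<forall>r < n - 1. A r r = P ^ ee r"
       and h4: "A (n - 1) (n - 1) = 1"
       and h5: "\<forall>r < n. A r (n - 1) = 1"
       and h6: "\<forall>r s. r < s \<and> s < n - 1 \<longrightarrow>
              (\<exists>a :: int. A r s = P * a) \<and> 0 \<le> A r s \<and> A r s < P ^ ee r"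
       and h7: "\<forall>i<n. \<forall>j<n. in_col_span n A (\<lambda>r. col A i r * col A j r)"
      unfolding irr_unfold by auto
    have Pp: "P > 0" using P_pos by simp
    define a where "a s = (if s \<in> I1 then A 0 s div P else 0)" for s
    define b where "b s = (if s \<in> Sg then A k s div P else 0)" for s
    have Ar: "A r s = 0" if "r < s" "s < n - 1" "r \<noteq> 0" "r \<noteq> k" for r s
    proof -
      have hh: "(\<exists>c. A r s = P * c) \<and> 0 \<le> A r s \<and> A r s < P ^ ee r" using h6 that by blast
      moreover have "ee r = 1" using that by (simp add: ee_def)
      ultimately have c0: "0 \<le> A r s" and c1: "A r s < P" by auto
      obtain c where c: "A r s = P * c" using hh by blast
      have "0 \<le> c" using c c0 Pp by (simp add: zero_le_mult_iff)
      moreover have "c < 1" using c c1 Pp by (metis mult.right_neutral mult_less_cancel_left_pos)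
      ultimately show ?thesis using c by simp
    qed
    have A0: "A 0 s = P * a s" if "s \<in> I1" for s
    proof -
      have "0 < s \<and> s < n - 1" using that by (simp add: I1_def)
      hence "\<exists>c. A 0 s = P * c" using h6 by blast
      then obtain c where c: "A 0 s = P * c" by blast
      thus ?thesis using that Pp by (simp add: a_def)
    qed
    have Ak: "A k s = P * b s" if "s \<in> Sg" for s
    proof -
      have "k < s \<and> s < n - 1" using that by (simp add: Sg_def)
      hence "\<exists>c. A k s = P * c" using h6 by blast
      then obtain c where c: "A k s = P * c" by blast
      thus ?thesis using that Pp by (simp add: b_def)
    qed
    have AM: "A = Mx a b"
    proof (intro ext)
      fix r s
      show "A r s = Mx a b r s"
      proof (cases "r < n \<and> s < n")
        case False thus ?thesis using h1 by (auto simp: Mx_def)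
      next
        case True
        show ?thesis
        proof (cases "s = n - 1")
          case True thus ?thesis using h5 \<open>r < n \<and> s < n\<close> by (simp add: Mx_def)
        next
          case sn: False
          show ?thesis
          proof (cases "r = s")
            case True thus ?thesis using h3 sn \<open>r < n \<and> s < n\<close> by (simp add: Mx_def)
          next
            case rs: False
            show ?thesis
            proof (cases "s < r")
              case True
              have "r = k \<Longrightarrow> b s = 0" using True by (auto simp: b_def Sg_def)
              thus ?thesis using h2 True rs sn \<open>r < n \<and> s < n\<close> by (auto simp: Mx_def)
            next
              case False
              hence rs2: "r < s" "s < n - 1" using rs sn \<open>r < n \<and> s < n\<close> by auto
              show ?thesis
              proof (cases "r = 0")
                case True
                have "s \<in> I1" using rs2 True by (auto simp: I1_def)
                thus ?thesis using A0 True rs sn \<open>r < n \<and> s < n\<close> by (simp add: Mx_def)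
              next
                case r0: False
                show ?thesis
                proof (cases "r = k")
                  case True
                  have "s \<in> Sg" using rs2 True by (auto simp: Sg_def)
                  thus ?thesis using Ak True rs sn r0 \<open>r < n \<and> s < n\<close> by (simp add: Mx_def)
                next
                  case False
                  thus ?thesis using Ar[OF rs2 r0 False] rs sn r0 \<open>r < n \<and> s < n\<close> by (simp add: Mx_def)
                qed
              qed
            qed
          qed
        qed
      qed
    qed
    have aD: "a \<in> Da"
    proof -
      have "0 \<le> a s \<and> a s < P ^ 2" if "s \<in> I1" for s
      proof -
        have "0 < s \<and> s < n - 1" using that by (simp add: I1_def)
        hence "0 \<le> A 0 s \<and> A 0 s < P ^ ee 0" using h6 by blast
        hence "0 \<le> A 0 s" "A 0 s < P ^ 3" by (auto simp: ee_def)
        hence "0 \<le> P * a s" "P * a s < P * P ^ 2" using A0[OF that] by (auto simp: power_eq_if)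
        thus ?thesis using Pp by (simp add: zero_le_mult_iff)
      qed
      thus ?thesis by (auto simp: Da_def ext_def a_def)
    qed
    have bD: "b \<in> Db"
    proof -
      have "0 \<le> b s \<and> b s < P ^ (\<beta> - 1)" if "s \<in> Sg" for s
      proof -
        have "k < s \<and> s < n - 1" using that by (simp add: Sg_def)
        hence "0 \<le> A k s \<and> A k s < P ^ ee k" using h6 by blast
        hence "0 \<le> A k s" "A k s < P ^ \<beta>" using kbounds by (auto simp: ee_def)
        moreover have "P ^ \<beta> = P * P ^ (\<beta> - 1)" using b1 by (simp add: power_eq_if[of P \<beta>])
        ultimately have "0 \<le> P * b s" "P * b s < P * P ^ (\<beta> - 1)" using Ak[OF that] by auto
        thus ?thesis using Pp by (simp add: zero_le_mult_iff)
      qed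
      thus ?thesis by (auto simp: Db_def ext_def b_def)
    qed
    have "\<forall>i\<in>I1. \<forall>j\<in>I1. condA a b i j" using all_prod_span[OF aD bD] h7 AM by simp
    thus "A \<in> (\<lambda>(a, b). Mx a b) ` PA" using AM aD bD unfolding PA_def by auto
  qed
qed

lemma g_PA: "g al p = card PA"
proof -
  have "PA \<subseteq> Da \<times> Db" by (auto simp: PA_def)
  hence "inj_on (\<lambda>(a, b). Mx a b) PA" using inj_Mx inj_on_subset by blast
  thus ?thesis unfolding g_def irr_image by (rule card_image)
qed

end

lemma zdiv_lt:
  fixes x d c :: int assumes "0 < d" "x < c * d" shows "x div d < c"
proof -
  have "x div d * d \<le> x" using assms(1)
    by (metis minus_mod_eq_mult_div le_diff_eq mult.commute pos_mod_sign add_increasing2 order_refl diff_add_cancel)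
  hence "x div d * d < c * d" using assms(2) by linarith
  thus ?thesis using assms(1) by (simp add: mult_less_cancel_right)
qed

context L begin

abbreviation "q \<equiv> P ^ (\<beta> - 2)"

definition gf :: "(nat \<Rightarrow> int) \<Rightarrow> nat \<Rightarrow> nat \<Rightarrow> int" where
  "gf f i j = f i * f j - (if i = j then f i else 0)"

definition clean :: "(nat \<Rightarrow> int) \<Rightarrow> (nat \<Rightarrow> int) \<Rightarrow> bool" where
  "clean a b \<longleftrightarrow> P dvd a k \<and> (\<forall>i\<in>R. \<forall>j\<in>R. q dvd gf b i j \<and> P dvd gf a i j - (a k div P) * (gf b i j div q))"

lemma Pb: "P ^ \<beta> = P ^ 2 * q"
proof -
  obtain m where m: "\<beta> = Suc (Suc m)" using b1 by (metis Suc_diff_Suc diff_Suc_1 less_imp_Suc_add plus_1_eq_Suc)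
  show ?thesis by (simp add: m power2_eq_square)
qed

lemma Pb1: "P ^ \<beta> = P * P ^ (\<beta> - 1)"
  using b1 by (simp add: power_eq_if[of P \<beta>])

lemma q_pos: "q > 0" using P_pos by simp

lemma I1_R: "I1 = insert k R" using kbounds by (auto simp: I1_def R_def)

lemma condA_kk: "condA a b k k \<longleftrightarrow> P dvd a k"
proof
  have Pn: "P \<noteq> 0" using P_pos by simp
  assume "condA a b k k"
  then obtain ck c0 where e1: "P ^ \<beta> * P ^ \<beta> = P ^ \<beta> * ck" and e2: "(P * a k) * (P * a k) = P ^ 3 * c0 + P * a k * ck"
    using kR by (auto simp: condA_def Mk_def)
  have "ck = P ^ \<beta>" using e1 Pn by simp
  hence "P ^ 2 * (a k * a k) = P ^ 2 * (P * c0 + a k * P ^ (\<beta> - 1))" using e2 Pb1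
    by (simp add: algebra_simps power2_eq_square power3_eq_cube)
  hence "a k * a k = P * c0 + a k * P ^ (\<beta> - 1)" using Pn by simp
  moreover have "P dvd P ^ (\<beta> - 1)" using b1 by (simp add: dvd_power)
  ultimately have "P dvd a k * a k" by (metis dvd_add dvd_mult dvd_triv_left)
  thus "P dvd a k" using Pprime by (simp add: prime_dvd_mult_iff)
next
  assume "P dvd a k"
  then obtain \<kappa> where kk: "a k = P * \<kappa>" by blast
  have "P ^ \<beta> * P ^ \<beta> = P ^ \<beta> * P ^ \<beta> + 0 \<and>
     (P * a k) * (P * a k) = P ^ 3 * (P * \<kappa> * \<kappa> - \<kappa> * P ^ (\<beta> - 1)) + P * a k * P ^ \<beta> + 0"
    using Pb1 kk by (simp add: algebra_simps power2_eq_square power3_eq_cube)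
  thus "condA a b k k" using kR unfolding condA_def Mk_def by auto
qed

lemma condA_kj:
  assumes j: "j \<in> R" and dk: "P dvd a k"
  shows "condA a b k j" "condA a b j k"
proof -
  obtain \<kappa> where kk: "a k = P * \<kappa>" using dk by blast
  have jk: "j \<noteq> k" using j kR by auto
  have "P ^ \<beta> * (P * b j) = P ^ \<beta> * (P * b j) + 0 \<and>
     (P * a k) * (P * a j) = P ^ 3 * (\<kappa> * (a j - b j)) + P * a k * (P * b j) + 0"
    using kk by (simp add: algebra_simps power3_eq_cube)
  thus "condA a b k j" using jk unfolding condA_def Mk_def by auto
  have "(P * b j) * P ^ \<beta> = P ^ \<beta> * (P * b j) + 0 \<and>
     (P * a j) * (P * a k) = P ^ 3 * (\<kappa> * (a j - b j)) + P * a k * (P * b j) + 0"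
    using kk by (simp add: algebra_simps power3_eq_cube)
  thus "condA a b j k" using jk unfolding condA_def Mk_def by auto
qed

lemma condA_ij:
  assumes i: "i \<in> R" and j: "j \<in> R" and dk: "P dvd a k"
  shows "condA a b i j \<longleftrightarrow> q dvd gf b i j \<and> P dvd gf a i j - (a k div P) * (gf b i j div q)"
proof -
  have Pn: "P \<noteq> 0" using P_pos by simp
  obtain \<kappa> where kk: "a k = P * \<kappa>" using dk by blast
  have kd: "a k div P = \<kappa>" using kk Pn by simp
  have ik: "i \<noteq> k" "j \<noteq> k" using i j kR by auto
  have c: "condA a b i j \<longleftrightarrow> (\<exists>ck c0. P ^ 2 * gf b i j = P ^ 2 * (q * ck) \<and>
      P ^ 2 * gf a i j = P ^ 2 * (P * c0 + \<kappa> * ck))"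
    unfolding condA_def Mk_def gf_def using ik i Pb kk
    by (intro ex_cong1 conj_cong refl) (auto simp: algebra_simps power2_eq_square power3_eq_cube)
  also have "\<dots> \<longleftrightarrow> (\<exists>ck c0. gf b i j = q * ck \<and> gf a i j = P * c0 + \<kappa> * ck)"
    using Pn by simp
  also have "\<dots> \<longleftrightarrow> q dvd gf b i j \<and> P dvd gf a i j - \<kappa> * (gf b i j div q)"
  proof
    assume "\<exists>ck c0. gf b i j = q * ck \<and> gf a i j = P * c0 + \<kappa> * ck"
    then obtain ck c0 where h: "gf b i j = q * ck" "gf a i j = P * c0 + \<kappa> * ck" by blast
    have qn: "q \<noteq> 0" using q_pos by linarith
    have "gf b i j div q = ck" using qn by (simp add: h(1))
    thus "q dvd gf b i j \<and> P dvd gf a i j - \<kappa> * (gf b i j div q)" using h by simp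
  next
    assume h: "q dvd gf b i j \<and> P dvd gf a i j - \<kappa> * (gf b i j div q)"
    then obtain c0 where c0: "gf a i j - \<kappa> * (gf b i j div q) = P * c0" by blast
    have "gf b i j = q * (gf b i j div q)" using h by simp
    moreover have "gf a i j = P * c0 + \<kappa> * (gf b i j div q)" using c0 by simp
    ultimately show "\<exists>ck c0. gf b i j = q * ck \<and> gf a i j = P * c0 + \<kappa> * ck" by blast
  qed
  finally show ?thesis using kd by simp
qed

lemma condA_clean: "(\<forall>i\<in>I1. \<forall>j\<in>I1. condA a b i j) \<longleftrightarrow> clean a b"
proof
  assume H: "\<forall>i\<in>I1. \<forall>j\<in>I1. condA a b i j"
  have dk: "P dvd a k" using H condA_kk I1_R by auto
  thus "clean a b" using H condA_ij[where a=a and b=b, OF _ _ dk] I1_R unfolding clean_def by auto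
next
  assume C: "clean a b"
  hence dk: "P dvd a k" by (simp add: clean_def)
  show "\<forall>i\<in>I1. \<forall>j\<in>I1. condA a b i j"
    unfolding I1_R using C condA_kk condA_kj[where a=a and b=b, OF _ dk] condA_ij[where a=a and b=b, OF _ _ dk] unfolding clean_def by auto
qed

definition cc :: "int \<Rightarrow> (nat \<Rightarrow> int) \<Rightarrow> (nat \<Rightarrow> int) \<Rightarrow> bool" where
  "cc \<kappa> \<alpha> b \<longleftrightarrow> (\<forall>i\<in>R. \<forall>j\<in>R. q dvd gf b i j \<and> P dvd gf \<alpha> i j - \<kappa> * (gf b i j div q))"

definition Core :: "(int \<times> (nat \<Rightarrow> int) \<times> (nat \<Rightarrow> int)) set" where
  "Core = {(\<kappa>, \<alpha>, b). \<kappa> \<in> {0..<P} \<and> \<alpha> \<in> ext R {0..<P} \<and> b \<in> Db \<and> cc \<kappa> \<alpha> b}"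

lemma card_R: "card R = n - 3"
proof -
  have "card R = card {1..<n-1} - 1" unfolding R_def using kbounds
    by (subst card_Diff_singleton) (auto)
  thus ?thesis by simp
qed

lemma gf_mod:
  assumes "a i mod P = c i mod P" "a j mod P = c j mod P"
  shows "gf a i j mod P = gf c i j mod P"
proof -
  have "(a i * a j) mod P = (c i * c j) mod P" using assms by (metis mod_mult_cong)
  thus ?thesis unfolding gf_def using assms by (auto intro: mod_diff_cong)
qed

lemma dvd_cong_mod:
  assumes "x mod P = y mod P"
  shows "P dvd x - z \<longleftrightarrow> P dvd y - z"
  using assms by (metis mod_diff_cong mod_eq_dvd_iff)

lemma PA_clean: "PA = {(a, b). a \<in> Da \<and> b \<in> Db \<and> clean a b}"
  unfolding PA_def condA_clean ..

lemma card_PA_Core: "card PA = card Core * p ^ (n - 3)"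
proof -
  define H where "H = ext R {0..<P}"
  define F where "F = (\<lambda>(a::nat\<Rightarrow>int, b::nat\<Rightarrow>int). ((a k div P, (\<lambda>s. if s \<in> R then a s mod P else 0), b),
      (\<lambda>s. if s \<in> R then a s div P else 0)))"
  define G where "G = (\<lambda>((\<kappa>::int, \<alpha>::nat\<Rightarrow>int, b::nat\<Rightarrow>int), h::nat\<Rightarrow>int).
      ((\<lambda>s. if s \<in> R then \<alpha> s + P * h s else if s = k then P * \<kappa> else 0), b))"
  have Pp: "P > 0" using P_pos by simp
  have "bij_betw F PA (Core \<times> H)"
  proof (rule bij_betw_byWitness[where f' = G])
    show "\<forall>x\<in>PA. G (F x) = x"
    proof
      fix x assume "x \<in> PA"
      then obtain a b where x: "x = (a, b)" and a: "a \<in> Da" and cl: "clean a b" by (auto simp: PA_clean)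
      have dk: "P dvd a k" using cl by (simp add: clean_def)
      have e: "(\<lambda>s. if s \<in> R then (if s \<in> R then a s mod P else 0) + P * (if s \<in> R then a s div P else 0) else if s = k then P * (a k div P) else 0) = a"
      proof
        fix s show "(if s \<in> R then (if s \<in> R then a s mod P else 0) + P * (if s \<in> R then a s div P else 0) else if s = k then P * (a k div P) else 0) = a s"
          using dk Da0[OF a, of s] by (auto simp: I1_R)
      qed
      show "G (F x) = x" unfolding F_def G_def x using e by simp
    qed
    show "\<forall>y\<in>Core \<times> H. F (G y) = y"
    proof
      fix y assume "y \<in> Core \<times> H"
      then obtain \<kappa> \<alpha> b h where y: "y = ((\<kappa>, \<alpha>, b), h)" and k: "\<kappa> \<in> {0..<P}" and al: "\<alpha> \<in> ext R {0..<P}"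
        and hH: "h \<in> H" by (auto simp: Core_def)
      have "(\<lambda>s. if s \<in> R then (if s \<in> R then \<alpha> s + P * h s else if s = k then P * \<kappa> else 0) mod P else 0) = \<alpha>"
      proof
        fix s show "(if s \<in> R then (if s \<in> R then \<alpha> s + P * h s else if s = k then P * \<kappa> else 0) mod P else 0) = \<alpha> s"
          using al by (auto simp: ext_def)
      qed
      moreover have "(\<lambda>s. if s \<in> R then (if s \<in> R then \<alpha> s + P * h s else if s = k then P * \<kappa> else 0) div P else 0) = h"
      proof
        fix s show "(if s \<in> R then (if s \<in> R then \<alpha> s + P * h s else if s = k then P * \<kappa> else 0) div P else 0) = h s"
          using al hH by (auto simp: ext_def H_def)
      qed
      moreover have "P * \<kappa> div P = \<kappa>" using Pp by simp
      ultimately show "F (G y) = y" using kR by (simp add: F_def G_def y)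
    qed
    show "F ` PA \<subseteq> Core \<times> H"
    proof
      fix z assume "z \<in> F ` PA"
      then obtain a b where z: "z = F (a, b)" and a: "a \<in> Da" and b: "b \<in> Db" and cl: "clean a b"
        by (auto simp: PA_clean)
      define \<alpha> where "\<alpha> = (\<lambda>s. if s \<in> R then a s mod P else 0)"
      have aR: "0 \<le> a s \<and> a s < P ^ 2" if "s \<in> I1" for s using a that by (auto simp: Da_def ext_def)
      have "0 \<le> a k div P" "a k div P < P" using aR[of k] Pp I1_R
        by (auto simp: pos_imp_zdiv_nonneg_iff power2_eq_square intro: zdiv_lt)
      moreover have "\<alpha> \<in> ext R {0..<P}" using Pp by (auto simp: \<alpha>_def ext_def)
      moreover have "(\<lambda>s. if s \<in> R then a s div P else 0) \<in> H"
        using aR Pp I1_R by (auto simp: H_def ext_def pos_imp_zdiv_nonneg_iff power2_eq_square intro: zdiv_lt)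
      moreover have "cc (a k div P) \<alpha> b"
        unfolding cc_def
      proof (intro ballI)
        fix i j assume i: "i \<in> R" and j: "j \<in> R"
        have "gf a i j mod P = gf \<alpha> i j mod P" by (rule gf_mod) (use i j in \<open>auto simp: \<alpha>_def\<close>)
        thus "q dvd gf b i j \<and> P dvd gf \<alpha> i j - a k div P * (gf b i j div q)"
          using cl i j dvd_cong_mod unfolding clean_def by blast
      qed
      ultimately show "z \<in> Core \<times> H" using b by (simp add: z F_def Core_def \<alpha>_def)
    qed
    show "G ` (Core \<times> H) \<subseteq> PA"
    proof
      fix z assume "z \<in> G ` (Core \<times> H)"
      then obtain \<kappa> \<alpha> b h where z: "z = G ((\<kappa>, \<alpha>, b), h)" and k: "\<kappa> \<in> {0..<P}" and al: "\<alpha> \<in> ext R {0..<P}"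
        and hH: "h \<in> H" and b: "b \<in> Db" and c: "cc \<kappa> \<alpha> b" by (auto simp: Core_def)
      define a where "a = (\<lambda>s. if s \<in> R then \<alpha> s + P * h s else if s = k then P * \<kappa> else 0)"
      have "a \<in> Da"
      proof -
        have "0 \<le> a s \<and> a s < P ^ 2" if "s \<in> I1" for s
        proof (cases "s \<in> R")
          case True
          have h1: "0 \<le> h s" "h s \<le> P - 1" "0 \<le> \<alpha> s" "\<alpha> s < P" using hH al True by (auto simp: H_def ext_def)
          have "P * h s \<le> P * (P - 1)" using h1 Pp by (intro mult_left_mono) auto
          hence "\<alpha> s + P * h s < P + P * (P - 1)" using h1 by linarith
          moreover have "P + P * (P - 1) = P ^ 2" by (simp add: algebra_simps power2_eq_square)
          moreover have "0 \<le> \<alpha> s + P * h s" using h1 Pp by simp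
          ultimately show ?thesis using True by (simp add: a_def)
        next
          case False
          hence "s = k" using that I1_R by auto
          thus ?thesis using k Pp kR by (auto simp: a_def power2_eq_square)
        qed
        hence "\<forall>s\<in>I1. a s \<in> {0..<P ^ 2}" by auto
        moreover have "\<forall>s. s \<notin> I1 \<longrightarrow> a s = 0" by (auto simp: a_def I1_R)
        ultimately show ?thesis by (simp add: Da_def ext_def)
      qed
      moreover have "clean a b"
        unfolding clean_def
      proof (intro conjI ballI)
        show "P dvd a k" using kR by (simp add: a_def)
        fix i j assume i: "i \<in> R" and j: "j \<in> R"
        have "gf a i j mod P = gf \<alpha> i j mod P" by (rule gf_mod) (use i j al in \<open>auto simp: a_def ext_def\<close>)
        moreover have "a k div P = \<kappa>" using kR Pp by (simp add: a_def)
        moreover have cij: "q dvd gf b i j \<and> P dvd gf \<alpha> i j - \<kappa> * (gf b i j div q)" using c i j unfolding cc_def by blast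
        ultimately show "q dvd gf b i j" "P dvd gf a i j - a k div P * (gf b i j div q)"
          using dvd_cong_mod[of "gf a i j" "gf \<alpha> i j"] by simp_all
      qed
      ultimately show "z \<in> PA" using b by (simp add: PA_clean z G_def a_def)
    qed
  qed
  hence "card PA = card (Core \<times> H)" by (rule bij_betw_same_card)
  also have "\<dots> = card Core * card H" by (rule card_cartesian_product)
  also have "card H = p ^ (n - 3)" unfolding H_def using finR card_R by (simp add: card_ext)
  finally show ?thesis .
qed

end

definition gg :: "(nat \<Rightarrow> int) \<Rightarrow> nat \<Rightarrow> nat \<Rightarrow> int" where
  "gg f i j = f i * f j - (if i = j then f i else 0)"

lemma gg_same[simp]: "gg f i i = f i * f i - f i" by (simp add: gg_def)
lemma gg_diff[simp]: "i \<noteq> j \<Longrightarrow> gg f i j = f i * f j" by (simp add: gg_def)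

definition unit :: "nat \<Rightarrow> nat \<Rightarrow> int" where "unit l = (\<lambda>s. if s = l then 1 else 0)"
definition sc :: "int \<Rightarrow> nat \<Rightarrow> nat \<Rightarrow> int" where "sc v l = (\<lambda>s. if s = l then v else 0)"
definition OI :: "nat set \<Rightarrow> (nat \<Rightarrow> int) set" where "OI I = insert (\<lambda>_. 0) (unit ` I)"

lemma unit_inj: "unit i = unit j \<longleftrightarrow> i = j"
  by (auto simp: unit_def fun_eq_iff split: if_splits)

lemma unit_ne0: "unit i \<noteq> (\<lambda>_. 0)" by (auto simp: unit_def fun_eq_iff)

lemma card_OI: "finite I \<Longrightarrow> card (OI I) = card I + 1"
proof -
  assume f: "finite I"
  have "card (unit ` I) = card I" using unit_inj by (intro card_image inj_onI) auto
  moreover have "(\<lambda>_. 0) \<notin> unit ` I"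
  proof
    assume "(\<lambda>_. 0) \<in> unit ` I"
    then obtain i where "(\<lambda>_. 0) = unit i" by blast
    thus False using unit_ne0 by metis
  qed
  ultimately show ?thesis using f by (simp add: OI_def)
qed

lemma finite_ext: "finite I \<Longrightarrow> finite D \<Longrightarrow> finite (ext I D)"
proof -
  assume fI: "finite I" and fD: "finite D"
  have "bij_betw (\<lambda>f. restrict f I) (ext I D) (PiE I (\<lambda>_. D))"
  proof (rule bij_betw_byWitness[where f' = "\<lambda>g x. if x \<in> I then g x else 0"])
    show "\<forall>a\<in>ext I D. (\<lambda>x. if x \<in> I then restrict a I x else 0) = a"
      by (auto simp: ext_def fun_eq_iff)
    show "\<forall>a'\<in>PiE I (\<lambda>_. D). restrict (\<lambda>x. if x \<in> I then a' x else 0) I = a'"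
      by (auto simp: fun_eq_iff PiE_def extensional_def)
    show "(\<lambda>f. restrict f I) ` ext I D \<subseteq> PiE I (\<lambda>_. D)"
      by (auto simp: ext_def)
    show "(\<lambda>g x. if x \<in> I then g x else 0) ` PiE I (\<lambda>_. D) \<subseteq> ext I D"
      by (auto simp: ext_def)
  qed
  moreover have "finite (PiE I (\<lambda>_. D))" using fI fD by (simp add: finite_PiE)
  ultimately show ?thesis by (metis bij_betw_finite)
qed

locale PR =
  fixes p :: nat
  assumes pp: "prime p"
begin

abbreviation "P \<equiv> int p"
abbreviation "Pr \<equiv> {0..<int p}"

lemma Pg1: "P > 1" using pp prime_gt_1_nat by auto
lemma Ppr: "prime P" using pp by simp

lemma eqP: "x \<in> Pr \<Longrightarrow> y \<in> Pr \<Longrightarrow> P dvd x - y \<Longrightarrow> x = y"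
  by (metis atLeastLessThan_iff mod_eq_dvd_iff mod_pos_pos_trivial)

lemma zP: "x \<in> Pr \<Longrightarrow> P dvd x \<Longrightarrow> x = 0"
  using eqP[of x 0] Pg1 by simp

lemma ndP: "x \<in> Pr \<Longrightarrow> x \<noteq> 0 \<Longrightarrow> \<not> P dvd x"
  using zP by blast

lemma pm: "P dvd x * y \<longleftrightarrow> P dvd x \<or> P dvd y"
  using Ppr by (rule prime_dvd_mult_iff)

lemma uniq_t:
  assumes "\<not> P dvd c"
  shows "card {t \<in> Pr. P dvd c * t - y} = 1"
proof -
  have cop: "coprime c P" using prime_imp_coprime[OF Ppr assms] by (simp add: coprime_commute)
  obtain u v where uv: "u * c + v * P = gcd c P" using bezout_int by blast
  hence uv1: "u * c + v * P = 1" using cop by (simp add: coprime_iff_gcd_eq_1)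
  define t0 where "t0 = (u * y) mod P"
  have t0P: "t0 \<in> Pr" using Pg1 by (simp add: t0_def)
  have "P dvd c * t0 - y"
  proof -
    have d1: "P dvd t0 - u * y" unfolding t0_def by (subst mod_eq_dvd_iff[symmetric]) simp
    have "c * (t0 - u * y) - (v * y) * P = c * t0 - y * (u * c + v * P)" by (simp add: algebra_simps)
    hence "c * t0 - y = c * (t0 - u * y) - (v * y) * P" using uv1 by simp
    thus ?thesis using d1 by (simp add: dvd_diff)
  qed
  moreover have "t = t0" if "t \<in> Pr" "P dvd c * t - y" for t
  proof -
    have "P dvd (c * t - y) - (c * t0 - y)" using that(2) \<open>P dvd c * t0 - y\<close> by (rule dvd_diff)
    hence "P dvd c * (t - t0)" by (simp add: algebra_simps)
    hence "P dvd t - t0" using assms pm by blast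
    thus ?thesis using eqP that t0P by blast
  qed
  ultimately have "{t \<in> Pr. P dvd c * t - y} = {t0}" using t0P by blast
  thus ?thesis by simp
qed

lemma uniq_t1:
  assumes "\<not> P dvd c" "\<not> P dvd y"
  shows "card {t \<in> {1..<P}. P dvd c * t - y} = 1"
proof -
  have nz: "t \<noteq> 0" if "P dvd c * t - y" for t
  proof
    assume "t = 0" thus False using that assms(2) by simp
  qed
  have "{t \<in> {1..<P}. P dvd c * t - y} = {t \<in> Pr. P dvd c * t - y}"
  proof (intro Collect_cong iffI)
    fix t assume "t \<in> {1..<P} \<and> P dvd c * t - y" thus "t \<in> Pr \<and> P dvd c * t - y" by auto
  next
    fix t assume h: "t \<in> Pr \<and> P dvd c * t - y"
    hence "t \<noteq> 0" using nz by blast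
    thus "t \<in> {1..<P} \<and> P dvd c * t - y" using h by auto
  qed
  thus ?thesis using uniq_t[OF assms(1)] by simp
qed

lemma count_param:
  assumes "finite X" "\<And>x. x \<in> X \<Longrightarrow> \<not> P dvd c x"
  shows "card {(x, t). x \<in> X \<and> t \<in> Pr \<and> P dvd c x * t - y x} = card X"
proof -
  have "{(x, t). x \<in> X \<and> t \<in> Pr \<and> P dvd c x * t - y x} = Sigma X (\<lambda>x. {t \<in> Pr. P dvd c x * t - y x})" by auto
  moreover have "\<forall>x\<in>X. finite {t \<in> Pr. P dvd c x * t - y x}"
    by (intro ballI finite_subset[OF _ finite_atLeastLessThan_int]) (rule Collect_subset)
  ultimately have "card {(x, t). x \<in> X \<and> t \<in> Pr \<and> P dvd c x * t - y x} = (\<Sum>x\<in>X. card {t \<in> Pr. P dvd c x * t - y x})"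
    using assms(1) by (simp only: card_SigmaI)
  also have "\<dots> = (\<Sum>x\<in>X. 1)" using uniq_t assms(2) by simp
  finally show ?thesis by simp
qed

lemma count_param1:
  assumes "finite X" "\<And>x. x \<in> X \<Longrightarrow> \<not> P dvd c x" "\<And>x. x \<in> X \<Longrightarrow> \<not> P dvd y x"
  shows "card {(x, t). x \<in> X \<and> t \<in> {1..<P} \<and> P dvd c x * t - y x} = card X"
proof -
  have "{(x, t). x \<in> X \<and> t \<in> {1..<P} \<and> P dvd c x * t - y x} = Sigma X (\<lambda>x. {t \<in> {1..<P}. P dvd c x * t - y x})" by auto
  moreover have "\<forall>x\<in>X. finite {t \<in> {1..<P}. P dvd c x * t - y x}"
    by (intro ballI finite_subset[OF _ finite_atLeastLessThan_int]) (rule Collect_subset)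
  ultimately have "card {(x, t). x \<in> X \<and> t \<in> {1..<P} \<and> P dvd c x * t - y x} = (\<Sum>x\<in>X. card {t \<in> {1..<P}. P dvd c x * t - y x})"
    using assms(1) by (simp only: card_SigmaI)
  also have "\<dots> = (\<Sum>x\<in>X. 1)" using uniq_t1 assms(2,3) by simp
  finally show ?thesis by simp
qed

lemma OI_char:
  assumes a: "\<alpha> \<in> ext I Pr" and H: "\<forall>i\<in>I. \<forall>j\<in>I. P dvd gg \<alpha> i j"
  shows "\<alpha> \<in> OI I"
proof (cases "\<forall>s. \<alpha> s = 0")
  case True thus ?thesis by (auto simp: OI_def fun_eq_iff)
next
  case False
  then obtain l where l: "\<alpha> l \<noteq> 0" by blast
  hence lI: "l \<in> I" using a by (auto simp: ext_def)
  have al: "\<alpha> l \<in> Pr" using a lI by (auto simp: ext_def)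
  have "P dvd gg \<alpha> l l" using H lI by blast
  hence "P dvd \<alpha> l * (\<alpha> l - 1)" by (simp add: algebra_simps)
  hence "P dvd \<alpha> l - 1" using pm ndP[OF al l] by blast
  hence l1: "\<alpha> l = 1" using eqP[OF al, of 1] Pg1 by simp
  have "\<alpha> s = unit l s" for s
  proof (cases "s = l")
    case True thus ?thesis using l1 by (simp add: unit_def)
  next
    case False
    show ?thesis
    proof (cases "s \<in> I")
      case True
      have "P dvd \<alpha> s" using H lI True False l1 by (metis gg_diff mult_1_right)
      thus ?thesis using zP a True False by (auto simp: ext_def unit_def)
    next
      case False2: False thus ?thesis using a False by (auto simp: ext_def unit_def)
    qed
  qed
  hence "\<alpha> = unit l" by auto
  thus ?thesis using lI by (simp add: OI_def)
qed

lemma OI_ext: "\<alpha> \<in> OI I \<Longrightarrow> \<alpha> \<in> ext I Pr"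
  using Pg1 by (auto simp: OI_def ext_def unit_def)

lemma OI_gg: "\<alpha> \<in> OI I \<Longrightarrow> gg \<alpha> i j = 0"
  by (auto simp: OI_def unit_def gg_def)

end

definition tw :: "int \<Rightarrow> int \<Rightarrow> nat \<Rightarrow> nat \<Rightarrow> nat \<Rightarrow> int" where
  "tw Q v i j = (\<lambda>s. if s = i then v else if s = j then Q + 1 - v else 0)"

locale CC = PR +
  fixes R Sg :: "nat set"
  assumes finR: "finite R" and SgR: "Sg \<subseteq> R"
begin

definition C2 :: "(int \<times> (nat \<Rightarrow> int) \<times> (nat \<Rightarrow> int)) set" where
  "C2 = {(\<kappa>, \<alpha>, b). \<kappa> \<in> Pr \<and> \<alpha> \<in> ext R Pr \<and> b \<in> ext Sg Pr \<and> (\<forall>i\<in>R. \<forall>j\<in>R. P dvd gg \<alpha> i j - \<kappa> * gg b i j)}"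

lemma ext_allP: "f \<in> ext I Pr \<Longrightarrow> f s \<in> Pr"
  using Pg1 by (cases "s \<in> I") (auto simp: ext_def)

lemma ndm: "\<not> P dvd x \<Longrightarrow> \<not> P dvd y \<Longrightarrow> \<not> P dvd x * y"
  using pm by blast

lemma three:
  assumes H: "\<forall>i\<in>R. \<forall>j\<in>R. P dvd gg \<alpha> i j - \<kappa> * gg b i j"
    and aP: "\<And>s. \<alpha> s \<in> Pr" and bP: "\<And>s. b s \<in> Pr" and k: "\<kappa> \<in> {1..<P}"
    and ijm: "i \<in> R" "j \<in> R" "m \<in> R" "i \<noteq> j" "i \<noteq> m" "j \<noteq> m"
    and nz: "b i \<noteq> 0" "b j \<noteq> 0" "b m \<noteq> 0"
  shows "\<alpha> i = b i \<and> \<kappa> = 1"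
proof -
  have kn: "\<not> P dvd \<kappa>" using k ndP[of \<kappa>] by auto
  have bn: "\<not> P dvd b i" "\<not> P dvd b j" "\<not> P dvd b m" using nz ndP bP by auto
  have Oij: "P dvd \<alpha> i * \<alpha> j - \<kappa> * (b i * b j)" using H ijm by (metis gg_diff)
  have Oim: "P dvd \<alpha> i * \<alpha> m - \<kappa> * (b i * b m)" using H ijm by (metis gg_diff)
  have Ojm: "P dvd \<alpha> j * \<alpha> m - \<kappa> * (b j * b m)" using H ijm by (metis gg_diff)
  have Di: "P dvd (\<alpha> i * \<alpha> i - \<alpha> i) - \<kappa> * (b i * b i - b i)" using H ijm by (metis gg_same)
  have id1: "\<kappa> * b j * b m * (\<alpha> i * \<alpha> i - \<kappa> * b i * b i) =
      \<alpha> i * \<alpha> i * (-(\<alpha> j * \<alpha> m - \<kappa> * (b j * b m))) + \<alpha> i * \<alpha> m * (\<alpha> i * \<alpha> j - \<kappa> * (b i * b j))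
      + \<kappa> * b i * b j * (\<alpha> i * \<alpha> m - \<kappa> * (b i * b m))"
    by (simp add: algebra_simps)
  have "P dvd \<kappa> * b j * b m * (\<alpha> i * \<alpha> i - \<kappa> * b i * b i)"
    unfolding id1 using Oij Oim Ojm by (intro dvd_add dvd_mult dvd_minus_iff[THEN iffD2])
  hence d1: "P dvd \<alpha> i * \<alpha> i - \<kappa> * b i * b i" using kn bn pm by blast
  have "(\<alpha> i * \<alpha> i - \<kappa> * b i * b i) - ((\<alpha> i * \<alpha> i - \<alpha> i) - \<kappa> * (b i * b i - b i)) = \<alpha> i - \<kappa> * b i"
    by (simp add: algebra_simps)
  hence d2: "P dvd \<alpha> i - \<kappa> * b i" using d1 Di by (metis dvd_diff)
  have "\<alpha> i * \<alpha> i - \<kappa> * b i * b i = (\<alpha> i - \<kappa> * b i) * (\<alpha> i + \<kappa> * b i) + \<kappa> * (b i * b i) * (\<kappa> - 1)"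
    by (simp add: algebra_simps)
  hence "P dvd \<kappa> * (b i * b i) * (\<kappa> - 1)" using d1 d2 by (metis dvd_add_right_iff dvd_mult2)
  hence "P dvd \<kappa> - 1" using kn bn pm by blast
  hence k1: "\<kappa> = 1" using eqP[of \<kappa> 1] k Pg1 by auto
  hence "P dvd \<alpha> i - b i" using d2 by simp
  hence "\<alpha> i = b i" using eqP aP bP by blast
  thus ?thesis using k1 by simp
qed

lemma dvd_range: "P dvd z \<Longrightarrow> 0 < z \<Longrightarrow> z < 2 * P \<Longrightarrow> z = P"
proof -
  assume "P dvd z" "0 < z" "z < 2 * P"
  then obtain c where c: "z = P * c" by blast
  have "0 < c" using c \<open>0 < z\<close> Pg1 by (simp add: zero_less_mult_iff)
  moreover have "c < 2" using c \<open>z < 2 * P\<close> Pg1 by (simp add: mult.commute)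
  ultimately have "c = 1" by simp
  thus ?thesis using c by simp
qed

lemma two:
  assumes H: "\<forall>i\<in>R. \<forall>j\<in>R. P dvd gg \<alpha> i j - \<kappa> * gg b i j"
    and aP: "\<And>s. \<alpha> s \<in> Pr" and bP: "\<And>s. b s \<in> Pr" and k: "\<kappa> \<in> {1..<P}"
    and aR: "\<And>s. s \<notin> R \<Longrightarrow> \<alpha> s = 0"
    and ij: "i \<in> R" "j \<in> R" "i \<noteq> j"
    and nz: "b i \<noteq> 0" "b j \<noteq> 0" and oth: "\<And>m. m \<noteq> i \<Longrightarrow> m \<noteq> j \<Longrightarrow> b m = 0"
  shows "(\<alpha> = b \<and> \<kappa> = 1) \<or> (b j = P + 1 - b i \<and> \<alpha> j = P + 1 - \<alpha> i \<and> b i \<in> {2..<P} \<and> \<alpha> i \<in> {2..<P}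
     \<and> \<alpha> i \<noteq> b i \<and> (\<forall>m. m \<noteq> i \<longrightarrow> m \<noteq> j \<longrightarrow> \<alpha> m = 0) \<and> P dvd \<kappa> * (b i * b i - b i) - (\<alpha> i * \<alpha> i - \<alpha> i))"
proof -
  define x where "x = \<alpha> i"
  define y where "y = \<alpha> j"
  define u where "u = b i"
  define w where "w = b j"
  have kn: "\<not> P dvd \<kappa>" using k ndP[of \<kappa>] by auto
  have un: "\<not> P dvd u" "\<not> P dvd w" using nz ndP bP by (auto simp: u_def w_def)
  have E3: "P dvd x * y - \<kappa> * (u * w)" using H ij unfolding x_def y_def u_def w_def by (metis gg_diff)
  have E1: "P dvd (x * x - x) - \<kappa> * (u * u - u)" using H ij unfolding x_def u_def by (metis gg_same)
  have E2: "P dvd (y * y - y) - \<kappa> * (w * w - w)" using H ij unfolding y_def w_def by (metis gg_same)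
  have kuw: "\<not> P dvd \<kappa> * (u * w)" using kn un pm by blast
  have xn: "\<not> P dvd x"
  proof
    assume "P dvd x" hence "P dvd x * y" by simp
    hence "P dvd \<kappa> * (u * w)" using E3 by (metis dvd_diff_right_iff dvd_minus_iff minus_diff_eq) 
    thus False using kuw by simp
  qed
  have yn: "\<not> P dvd y"
  proof
    assume "P dvd y" hence "P dvd x * y" by simp
    hence "P dvd \<kappa> * (u * w)" using E3 by (metis dvd_diff_right_iff dvd_minus_iff minus_diff_eq)
    thus False using kuw by simp
  qed
  have am: "\<forall>m. m \<noteq> i \<longrightarrow> m \<noteq> j \<longrightarrow> \<alpha> m = 0"
  proof (intro allI impI)
    fix m assume m: "m \<noteq> i" "m \<noteq> j"
    show "\<alpha> m = 0"
    proof (cases "m \<in> R")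
      case True
      have "P dvd gg \<alpha> m i - \<kappa> * gg b m i" using H True ij by blast
      hence "P dvd \<alpha> m * x" using m oth[OF m] by (simp add: x_def)
      hence "P dvd \<alpha> m" using xn pm by blast
      thus ?thesis using zP aP by blast
    next
      case False thus ?thesis using aR by blast
    qed
  qed
  define F1 where "F1 = w * x - w - u * y + y"
  define F2 where "F2 = u * y - u - w * x + x"
  have "x * F1 = w * ((x * x - x) - \<kappa> * (u * u - u)) - (u - 1) * (x * y - \<kappa> * (u * w))"
    unfolding F1_def by (simp add: algebra_simps)
  hence "P dvd x * F1" using E1 E3 by (metis dvd_diff dvd_mult)
  hence dF1: "P dvd F1" using xn pm by blast
  have "y * F2 = u * ((y * y - y) - \<kappa> * (w * w - w)) - (w - 1) * (x * y - \<kappa> * (u * w))"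
    unfolding F2_def by (simp add: algebra_simps)
  hence "P dvd y * F2" using E2 E3 by (metis dvd_diff dvd_mult)
  hence dF2: "P dvd F2" using yn pm by blast
  have G: "P dvd x + y - u - w" using dvd_add[OF dF1 dF2] unfolding F1_def F2_def by (simp add: algebra_simps)
  have "(x - u) * (u + w - 1) = F1 - (1 - u) * (x + y - u - w)" unfolding F1_def by (simp add: algebra_simps)
  hence d3: "P dvd (x - u) * (u + w - 1)" using dF1 G by (simp add: dvd_diff)
  have xP: "x \<in> Pr" "y \<in> Pr" "u \<in> Pr" "w \<in> Pr" using aP bP by (auto simp: x_def y_def u_def w_def)
  have x0: "x \<noteq> 0" "y \<noteq> 0" "u \<noteq> 0" "w \<noteq> 0" using xn yn un by auto
  show ?thesis
  proof (cases "x = u")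
    case True
    hence "P dvd y - w" using G by simp
    hence yw: "y = w" using eqP xP by blast
    have ab: "\<alpha> = b"
    proof
      fix s show "\<alpha> s = b s"
        using True yw am oth[of s] by (cases "s = i"; cases "s = j") (auto simp: x_def y_def u_def w_def)
    qed
    have "P dvd (u * w) * (1 - \<kappa>)" using E3 True yw by (simp add: algebra_simps)
    hence "P dvd 1 - \<kappa>" using un pm by blast
    hence "\<kappa> = 1" using eqP[of 1 \<kappa>] k Pg1 by auto
    thus ?thesis using ab by simp
  next
    case False
    hence "\<not> P dvd x - u" using eqP xP by blast
    hence "P dvd u + w - 1" using d3 pm by blast
    hence uw: "u + w - 1 = P" using dvd_range xP x0 by auto
    have e: "x + y - 1 = (x + y - u - w) + P" using uw by linarith
    have "P dvd x + y - 1" unfolding e by (rule dvd_add[OF G dvd_refl])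
    hence xy: "x + y - 1 = P" using dvd_range xP x0 by auto
    have "P dvd \<kappa> * (u * u - u) - (x * x - x)" using E1 by (metis dvd_minus_iff minus_diff_eq)
    moreover have "w = P + 1 - u" "y = P + 1 - x" using uw xy by simp_all
    moreover have "u \<in> {2..<P}" "x \<in> {2..<P}" using uw xy xP by auto
    ultimately have "w = P + 1 - u \<and> y = P + 1 - x \<and> u \<in> {2..<P} \<and> x \<in> {2..<P}
     \<and> x \<noteq> u \<and> (\<forall>m. m \<noteq> i \<longrightarrow> m \<noteq> j \<longrightarrow> \<alpha> m = 0) \<and> P dvd \<kappa> * (u * u - u) - (x * x - x)"
      using False am by blast
    thus ?thesis unfolding x_def u_def y_def w_def by blast
  qed
qed

definition "P0 = {(0::int, \<alpha>, b) | \<alpha> b. \<alpha> \<in> OI R \<and> b \<in> ext Sg Pr}"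
definition "P1 = {(1::int, b, b) | b. b \<in> ext Sg Pr}"
definition "P2 = {(\<kappa>, \<alpha>, \<lambda>_::nat. 0::int) | \<kappa> \<alpha>. \<kappa> \<in> {1..<P} \<and> \<alpha> \<in> OI R \<and> \<not> (\<kappa> = 1 \<and> \<alpha> = (\<lambda>_. 0))}"
definition "P3 = {(\<kappa>, \<alpha>, unit j) | \<kappa> \<alpha> j. j \<in> Sg \<and> \<kappa> \<in> {1..<P} \<and> \<alpha> \<in> OI R \<and> \<not> (\<kappa> = 1 \<and> \<alpha> = unit j)}"
definition "P4 = {(\<kappa>, sc v j, sc c j) | \<kappa> v c j. j \<in> Sg \<and> c \<in> {2..<P} \<and> v \<in> {2..<P} \<and> v \<noteq> c \<and> \<kappa> \<in> {1..<P}
   \<and> P dvd (c * c - c) * \<kappa> - (v * v - v)}"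
definition "P5 = {(\<kappa>, tw P v i j, tw P c i j) | \<kappa> v c i j. i \<in> Sg \<and> j \<in> Sg \<and> i < j \<and> c \<in> {2..<P} \<and> v \<in> {2..<P} \<and> v \<noteq> c
   \<and> \<kappa> \<in> {1..<P} \<and> P dvd (c * c - c) * \<kappa> - (v * v - v)}"

lemma C2_sub: "C2 \<subseteq> P0 \<union> P1 \<union> P2 \<union> P3 \<union> P4 \<union> P5"
proof
  fix z assume "z \<in> C2"
  then obtain \<kappa> \<alpha> b where z: "z = (\<kappa>, \<alpha>, b)" and kP: "\<kappa> \<in> Pr" and ae: "\<alpha> \<in> ext R Pr" and be: "b \<in> ext Sg Pr"
    and H: "\<forall>i\<in>R. \<forall>j\<in>R. P dvd gg \<alpha> i j - \<kappa> * gg b i j" by (auto simp: C2_def)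
  have aP: "\<And>s. \<alpha> s \<in> Pr" using ae ext_allP by blast
  have bP: "\<And>s. b s \<in> Pr" using be ext_allP by blast
  have aR: "\<And>s. s \<notin> R \<Longrightarrow> \<alpha> s = 0" using ae by (auto simp: ext_def)
  have bS: "\<And>s. s \<notin> Sg \<Longrightarrow> b s = 0" using be by (auto simp: ext_def)
  have bR: "\<And>s. b s \<noteq> 0 \<Longrightarrow> s \<in> R" using bS SgR by blast
  show "z \<in> P0 \<union> P1 \<union> P2 \<union> P3 \<union> P4 \<union> P5"
  proof (cases "\<kappa> = 0")
    case True
    hence "\<forall>i\<in>R. \<forall>j\<in>R. P dvd gg \<alpha> i j" using H by simp
    hence "\<alpha> \<in> OI R" using OI_char ae by blast
    thus ?thesis using True be by (auto simp: z P0_def)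
  next
    case False
    hence k: "\<kappa> \<in> {1..<P}" using kP by auto
    have kn: "\<not> P dvd \<kappa>" using k ndP[of \<kappa>] by auto
    show ?thesis
    proof (cases "\<forall>s. b s = 0")
      case True
      hence b0: "b = (\<lambda>_. 0)" by auto
      hence "\<forall>i\<in>R. \<forall>j\<in>R. P dvd gg \<alpha> i j" using H by (simp add: gg_def)
      hence aO: "\<alpha> \<in> OI R" using OI_char ae by blast
      show ?thesis
      proof (cases "\<kappa> = 1 \<and> \<alpha> = (\<lambda>_. 0)")
        case True thus ?thesis using b0 be by (auto simp: z P1_def)
      next
        case False thus ?thesis using b0 aO k by (auto simp: z P2_def)
      qed
    next
      case False
      then obtain j where bj: "b j \<noteq> 0" by blast
      have jS: "j \<in> Sg" using bS bj by blast
      hence jR: "j \<in> R" using SgR by blast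
      show ?thesis
      proof (cases "\<forall>m. m \<noteq> j \<longrightarrow> b m = 0")
        case single: True
        have offb: "gg b i m = 0" if "i \<noteq> m" for i m using single that by (cases "i = j") auto
        have Doff: "P dvd \<alpha> i * \<alpha> m" if "i \<in> R" "m \<in> R" "i \<noteq> m" for i m
          using H that offb[OF that(3)] by (metis gg_diff diff_zero mult_zero_right)
        show ?thesis
        proof (cases "b j = 1")
          case True
          hence bu: "b = unit j" using single by (auto simp: unit_def fun_eq_iff)
          have "\<forall>i\<in>R. \<forall>m\<in>R. P dvd gg \<alpha> i m"
          proof (intro ballI)
            fix i m assume "i \<in> R" "m \<in> R"
            thus "P dvd gg \<alpha> i m" using H bu OI_gg[of "unit j" Sg] jS by (auto simp: OI_def)
          qed
          hence aO: "\<alpha> \<in> OI R" using OI_char ae by blast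
          show ?thesis
          proof (cases "\<kappa> = 1 \<and> \<alpha> = unit j")
            case True thus ?thesis using bu be by (auto simp: z P1_def)
          next
            case False thus ?thesis using bu aO k jS by (auto simp: z P3_def)
          qed
        next
          case False
          define c where "c = b j"
          have cP: "c \<in> {2..<P}" using False bj bP[of j] by (auto simp: c_def)
          have cn: "\<not> P dvd c" "\<not> P dvd c - 1" using cP ndP[of c] ndP[of "c - 1"] by auto
          have kc: "\<not> P dvd \<kappa> * (c * c - c)"
          proof -
            have "\<kappa> * (c * c - c) = \<kappa> * (c * (c - 1))" by (simp add: algebra_simps)
            thus ?thesis using kn cn pm by metis
          qed
          have Dj: "P dvd (\<alpha> j * \<alpha> j - \<alpha> j) - \<kappa> * (c * c - c)" using H jR by (metis gg_same c_def)
          define v where "v = \<alpha> j"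
          have v0: "v \<noteq> 0"
          proof
            assume "v = 0" hence "P dvd \<kappa> * (c * c - c)" using Dj by (simp add: v_def)
            thus False using kc by simp
          qed
          have v1: "v \<noteq> 1"
          proof
            assume "v = 1" hence "P dvd \<kappa> * (c * c - c)" using Dj by (simp add: v_def)
            thus False using kc by simp
          qed
          have vP: "v \<in> {2..<P}" using v0 v1 aP[of j] by (auto simp: v_def)
          have am: "\<alpha> m = 0" if "m \<noteq> j" for m
          proof (cases "m \<in> R")
            case True
            have "P dvd \<alpha> m * v" using Doff[OF True jR that] by (simp add: v_def)
            hence "P dvd \<alpha> m" using pm ndP[of v] vP by auto
            thus ?thesis using zP aP by blast
          qed (use aR in blast)
          have asc: "\<alpha> = sc v j" using am by (auto simp: sc_def fun_eq_iff v_def)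
          have bsc: "b = sc c j" using single by (auto simp: sc_def fun_eq_iff c_def)
          have dd: "P dvd (c * c - c) * \<kappa> - (v * v - v)" using Dj
            by (metis dvd_minus_iff minus_diff_eq mult.commute v_def)
          show ?thesis
          proof (cases "v = c")
            case True
            hence "P dvd (c * c - c) * (\<kappa> - 1)" using dd by (simp add: algebra_simps)
            moreover have "(c * c - c) * (\<kappa> - 1) = c * ((c - 1) * (\<kappa> - 1))" by (simp add: algebra_simps)
            ultimately have "P dvd c * ((c - 1) * (\<kappa> - 1))" by simp
            hence "P dvd \<kappa> - 1" using cn pm by blast
            hence "\<kappa> = 1" using eqP[of \<kappa> 1] k Pg1 by auto
            thus ?thesis using asc bsc True be by (auto simp: z P1_def)
          next
            case False
            thus ?thesis using asc bsc cP vP k jS dd by (auto simp: z P4_def)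
          qed
        qed
      next
        case False
        then obtain i where ij: "i \<noteq> j" and bi: "b i \<noteq> 0" by blast
        have iR: "i \<in> R" using bR bi by blast
        show ?thesis
        proof (cases "\<exists>m. m \<noteq> i \<and> m \<noteq> j \<and> b m \<noteq> 0")
          case True
          then obtain m where m: "m \<noteq> i" "m \<noteq> j" "b m \<noteq> 0" by blast
          have mR: "m \<in> R" using bR m by blast
          have k1: "\<kappa> = 1" using three[OF H aP bP k iR jR mR ij m(1)[symmetric] m(2)[symmetric] bi bj m(3)] by simp
          have nzeq: "\<alpha> s = b s" if "b s \<noteq> 0" for s
          proof -
            have sR: "s \<in> R" using bR that by blast
            consider "s = i" | "s = j" | "s = m" | "s \<noteq> i \<and> s \<noteq> j \<and> s \<noteq> m" by blast
            thus ?thesis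
            proof cases
              case 1 thus ?thesis using three[OF H aP bP k iR jR mR ij m(1)[symmetric] m(2)[symmetric] bi bj m(3)] by simp
            next
              case 2 thus ?thesis using three[OF H aP bP k jR iR mR ij[symmetric] m(2)[symmetric] m(1)[symmetric] bj bi m(3)] by simp
            next
              case 3 thus ?thesis using three[OF H aP bP k mR iR jR m(1) m(2) ij m(3) bi bj] by simp
            next
              case 4 thus ?thesis using three[OF H aP bP k sR iR jR _ _ ij that bi bj] by simp
            qed
          qed
          have "\<alpha> = b"
          proof
            fix s show "\<alpha> s = b s"
            proof (cases "b s = 0")
              case False thus ?thesis using nzeq by blast
            next
              case True
              show ?thesis
              proof (cases "s \<in> R")
                case sR: True
                have si: "s \<noteq> i" using True bi by auto
                have "P dvd gg \<alpha> s i - \<kappa> * gg b s i" using H sR iR by blast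
                hence "P dvd \<alpha> s * \<alpha> i" using si True by simp
                moreover have "\<not> P dvd \<alpha> i" using nzeq[OF bi] bi ndP bP by metis
                ultimately have "P dvd \<alpha> s" using pm by blast
                thus ?thesis using zP aP True by metis
              next
                case False thus ?thesis using aR True by metis
              qed
            qed
          qed
          thus ?thesis using k1 be by (auto simp: z P1_def)
        next
          case False
          hence oth: "\<And>m. m \<noteq> i \<Longrightarrow> m \<noteq> j \<Longrightarrow> b m = 0" by blast
          have iS: "i \<in> Sg" using bS bi by blast
          have gen: "z \<in> P1 \<union> P5" if lt: "i' < j'" and ij': "{i', j'} = {i, j}" for i' j'
          proof -
            have ijR': "i' \<in> R" "j' \<in> R" "i' \<noteq> j'" using ij' iR jR lt by auto
            have nz': "b i' \<noteq> 0" "b j' \<noteq> 0" using ij' bi bj by auto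
            have oth': "\<And>m. m \<noteq> i' \<Longrightarrow> m \<noteq> j' \<Longrightarrow> b m = 0" using ij' oth by auto
            have S': "i' \<in> Sg" "j' \<in> Sg" using ij' iS jS by auto
            from two[OF H aP bP k aR ijR' nz' oth']
            show ?thesis
            proof
              assume "\<alpha> = b \<and> \<kappa> = 1" thus ?thesis using be by (auto simp: z P1_def)
            next
              assume h: "b j' = P + 1 - b i' \<and> \<alpha> j' = P + 1 - \<alpha> i' \<and> b i' \<in> {2..<P} \<and> \<alpha> i' \<in> {2..<P}
                 \<and> \<alpha> i' \<noteq> b i' \<and> (\<forall>m. m \<noteq> i' \<longrightarrow> m \<noteq> j' \<longrightarrow> \<alpha> m = 0) \<and> P dvd \<kappa> * (b i' * b i' - b i') - (\<alpha> i' * \<alpha> i' - \<alpha> i')"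
              have "\<alpha> = tw P (\<alpha> i') i' j'" using h ijR' by (auto simp: tw_def fun_eq_iff)
              moreover have "b = tw P (b i') i' j'" using h ijR' oth' by (auto simp: tw_def fun_eq_iff)
              moreover have "P dvd (b i' * b i' - b i') * \<kappa> - (\<alpha> i' * \<alpha> i' - \<alpha> i')" using h by (simp add: mult.commute)
              ultimately show ?thesis using h S' lt k unfolding z P5_def by blast
            qed
          qed
          have "z \<in> P1 \<union> P5"
          proof (cases "i < j")
            case True thus ?thesis using gen by blast
          next
            case False hence "j < i" using ij by auto
            thus ?thesis using gen[of j i] by blast
          qed
          thus ?thesis by blast
        qed
      qed
    qed
  qed
qed

lemma ext_mono: "f \<in> ext Sg Pr \<Longrightarrow> f \<in> ext R Pr"
  using SgR Pg1 by (auto simp: ext_def)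

lemma sc_ext: "j \<in> I \<Longrightarrow> v \<in> Pr \<Longrightarrow> sc v j \<in> ext I Pr"
  using Pg1 by (auto simp: ext_def sc_def)

lemma unit_ext: "j \<in> I \<Longrightarrow> unit j \<in> ext I Pr"
  using Pg1 by (auto simp: ext_def unit_def)

lemma tw_ext: "i \<in> I \<Longrightarrow> j \<in> I \<Longrightarrow> i \<noteq> j \<Longrightarrow> v \<in> {2..<P} \<Longrightarrow> tw P v i j \<in> ext I Pr"
  using Pg1 by (auto simp: ext_def tw_def)

lemma gg_sc: "gg (sc v j) s t = (if s = j \<and> t = j then v * v - v else 0)"
  by (auto simp: gg_def sc_def)

lemma tw_sq: "P dvd ((P + 1 - v) * (P + 1 - v) - (P + 1 - v)) - (v * v - v)"
proof -
  have "((P + 1 - v) * (P + 1 - v) - (P + 1 - v)) - (v * v - v) = P * (P - 2 * v + 1)"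
    by (simp add: algebra_simps)
  thus ?thesis by simp
qed

lemma tw_cross: "P dvd v * (P + 1 - v) + (v * v - v)"
proof -
  have "v * (P + 1 - v) + (v * v - v) = P * v" by (simp add: algebra_simps)
  thus ?thesis by simp
qed

lemma C2_sup: "P0 \<union> P1 \<union> P2 \<union> P3 \<union> P4 \<union> P5 \<subseteq> C2"
proof -
  have k0: "0 \<in> Pr" "1 \<in> Pr" using Pg1 by auto
  have "P0 \<subseteq> C2" using OI_gg OI_ext k0 by (auto simp: P0_def C2_def)
  moreover have "P1 \<subseteq> C2" using ext_mono k0 by (auto simp: P1_def C2_def)
  moreover have "P2 \<subseteq> C2" using OI_gg OI_ext by (auto simp: P2_def C2_def ext_def gg_def)
  moreover have "P3 \<subseteq> C2"
  proof
    fix z assume "z \<in> P3"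
    then obtain \<kappa> \<alpha> j where z: "z = (\<kappa>, \<alpha>, unit j)" and j: "j \<in> Sg" and k: "\<kappa> \<in> {1..<P}" and a: "\<alpha> \<in> OI R"
      by (auto simp: P3_def)
    have "unit j \<in> OI Sg" using j by (simp add: OI_def)
    thus "z \<in> C2" using OI_gg[OF a] OI_gg[of "unit j" Sg] OI_ext[OF a] unit_ext[OF j] k
      by (auto simp: z C2_def)
  qed
  moreover have "P4 \<subseteq> C2"
  proof
    fix z assume "z \<in> P4"
    then obtain \<kappa> v c j where z: "z = (\<kappa>, sc v j, sc c j)" and j: "j \<in> Sg" and c: "c \<in> {2..<P}" and v: "v \<in> {2..<P}"
      and k: "\<kappa> \<in> {1..<P}" and d: "P dvd (c * c - c) * \<kappa> - (v * v - v)" by (auto simp: P4_def)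
    have d': "P dvd (v * v - v) - \<kappa> * (c * c - c)" using d by (metis dvd_minus_iff minus_diff_eq mult.commute)
    have "\<forall>s\<in>R. \<forall>t\<in>R. P dvd gg (sc v j) s t - \<kappa> * gg (sc c j) s t"
      using d' by (auto simp: gg_sc)
    thus "z \<in> C2" using sc_ext[of j R v] sc_ext[of j Sg c] j SgR c v k by (auto simp: z C2_def)
  qed
  moreover have "P5 \<subseteq> C2"
  proof
    fix z assume "z \<in> P5"
    then obtain \<kappa> v c i j where z: "z = (\<kappa>, tw P v i j, tw P c i j)" and ij: "i \<in> Sg" "j \<in> Sg" "i < j" and c: "c \<in> {2..<P}"
      and v: "v \<in> {2..<P}"
      and k: "\<kappa> \<in> {1..<P}" and d: "P dvd (c * c - c) * \<kappa> - (v * v - v)" by (auto simp: P5_def)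
    have d': "P dvd (v * v - v) - \<kappa> * (c * c - c)" using d by (metis dvd_minus_iff minus_diff_eq mult.commute)
    define v' where "v' = P + 1 - v"
    define c' where "c' = P + 1 - c"
    have X: "P dvd (v' * v' - v') - (v * v - v)" using tw_sq[of v] unfolding v'_def .
    have Y: "P dvd (c' * c' - c') - (c * c - c)" using tw_sq[of c] unfolding c'_def .
    have X2: "P dvd v * v' + (v * v - v)" using tw_cross[of v] unfolding v'_def .
    have Y2: "P dvd c * c' + (c * c - c)" using tw_cross[of c] unfolding c'_def .
    have jj: "P dvd (v' * v' - v') - \<kappa> * (c' * c' - c')"
    proof -
      have e: "(v' * v' - v') - \<kappa> * (c' * c' - c') = ((v' * v' - v') - (v * v - v)) - \<kappa> * ((c' * c' - c') - (c * c - c))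
         + ((v * v - v) - \<kappa> * (c * c - c))" by (simp add: algebra_simps)
      show ?thesis unfolding e by (intro dvd_add dvd_diff dvd_mult X Y d')
    qed
    have ij2: "P dvd v * v' - \<kappa> * (c * c')"
    proof -
      have e: "v * v' - \<kappa> * (c * c') = (v * v' + (v * v - v)) - \<kappa> * (c * c' + (c * c - c)) - ((v * v - v) - \<kappa> * (c * c - c))"
        by (simp add: algebra_simps)
      show ?thesis unfolding e by (intro dvd_add dvd_diff dvd_mult X2 Y2 d')
    qed
    have ij3: "P dvd v' * v - \<kappa> * (c' * c)" using ij2 by (simp add: mult.commute)
    have "P dvd gg (tw P v i j) s t - \<kappa> * gg (tw P c i j) s t" for s t
      using ij d' jj ij2 ij3 unfolding v'_def c'_def by (auto simp: gg_def tw_def)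
    hence "\<forall>s\<in>R. \<forall>t\<in>R. P dvd gg (tw P v i j) s t - \<kappa> * gg (tw P c i j) s t" by blast
    thus "z \<in> C2" using tw_ext[of i R j v] tw_ext[of i Sg j c] ij SgR c v k by (auto simp: z C2_def)
  qed
  ultimately show ?thesis by blast
qed

lemma C2_eq: "C2 = P0 \<union> P1 \<union> P2 \<union> P3 \<union> P4 \<union> P5"
  using C2_sub C2_sup by blast

lemma card_Pr: "card Pr = p" by simp
lemma card_img: "A = f ` X \<Longrightarrow> inj_on f X \<Longrightarrow> card A = card X" by (simp add: card_image)
lemma nP2: "nat (P - 2) = p - 2" using Pg1 by linarith
lemma nP1: "nat (P - 1) = p - 1" using Pg1 by linarith
lemma card2: "card {2..<P} = p - 2" using nP2 by simp
lemma card1: "card {1..<P} = p - 1" using nP1 by simp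
lemma finSg: "finite Sg" using finR SgR finite_subset by blast
lemma finOI: "finite (OI R)" using finR by (simp add: OI_def)

lemma cP0: "card P0 = (card R + 1) * p ^ card Sg"
proof -
  have eq: "P0 = (\<lambda>(\<alpha>, b). (0::int, \<alpha>, b)) ` (OI R \<times> ext Sg Pr)" by (auto simp: P0_def)
  have inj: "inj_on (\<lambda>(\<alpha>, b). (0::int, \<alpha>, b)) (OI R \<times> ext Sg Pr)" by (auto simp: inj_on_def)
  have "card P0 = card (OI R \<times> ext Sg Pr)" by (subst eq) (rule card_image[OF inj])
  thus ?thesis using finR finSg by (simp add: card_cartesian_product card_OI card_ext)
qed

lemma cP1: "card P1 = p ^ card Sg"
proof -
  have eq: "P1 = (\<lambda>b. (1::int, b, b)) ` (ext Sg Pr)" by (auto simp: P1_def)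
  have inj: "inj_on (\<lambda>b. (1::int, b, b)) (ext Sg Pr)" by (auto simp: inj_on_def)
  have "card P1 = card (ext Sg Pr)" by (subst eq) (rule card_image[OF inj])
  thus ?thesis using finSg by (simp add: card_ext)
qed

lemma cP2: "card P2 = (p - 1) * (card R + 1) - 1"
proof -
  have eq: "P2 = (\<lambda>(\<kappa>, \<alpha>). (\<kappa>, \<alpha>, \<lambda>_::nat. 0::int)) ` ({1..<P} \<times> OI R - {(1, \<lambda>_. 0)})" by (auto simp: P2_def)
  have inj: "inj_on (\<lambda>(\<kappa>, \<alpha>). (\<kappa>, \<alpha>, \<lambda>_::nat. 0::int)) ({1..<P} \<times> OI R - {(1, \<lambda>_. 0)})" by (auto simp: inj_on_def)
  have "card P2 = card ({1..<P} \<times> OI R - {(1, \<lambda>_. 0)})" by (subst eq) (rule card_image[OF inj])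
  also have "\<dots> = card ({1..<P} \<times> OI R) - 1" using Pg1 finOI by (subst card_Diff_singleton) (auto simp: OI_def)
  also have "card ({1..<P} \<times> OI R) = (p - 1) * (card R + 1)" using finR by (simp only: card_cartesian_product card_OI card1)
  finally show ?thesis .
qed

lemma cP3: "card P3 = card Sg * ((p - 1) * (card R + 1) - 1)"
proof -
  define S where "S = Sigma Sg (\<lambda>j. {1..<P} \<times> OI R - {(1, unit j)})"
  have eq: "P3 = (\<lambda>(j, \<kappa>, \<alpha>). (\<kappa>, \<alpha>, unit j)) ` S"
  proof
    show "P3 \<subseteq> (\<lambda>(j, \<kappa>, \<alpha>). (\<kappa>, \<alpha>, unit j)) ` S"
    proof
      fix z assume "z \<in> P3"
      then obtain \<kappa> \<alpha> j where z: "z = (\<kappa>, \<alpha>, unit j)" and h: "j \<in> Sg" "\<kappa> \<in> {1..<P}" "\<alpha> \<in> OI R" "\<not> (\<kappa> = 1 \<and> \<alpha> = unit j)"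
        by (auto simp: P3_def)
      show "z \<in> (\<lambda>(j, \<kappa>, \<alpha>). (\<kappa>, \<alpha>, unit j)) ` S"
        by (rule image_eqI[where x = "(j, \<kappa>, \<alpha>)"]) (use z h in \<open>auto simp: S_def\<close>)
    qed
    show "(\<lambda>(j, \<kappa>, \<alpha>). (\<kappa>, \<alpha>, unit j)) ` S \<subseteq> P3" by (auto simp: P3_def S_def)
  qed
  have inj: "inj_on (\<lambda>(j, \<kappa>, \<alpha>). (\<kappa>, \<alpha>, unit j)) S" by (auto simp: inj_on_def unit_inj)
  have "card P3 = card S" by (subst eq) (rule card_image[OF inj])
  also have "\<dots> = (\<Sum>j\<in>Sg. card ({1..<P} \<times> OI R - {(1, unit j)}))" unfolding S_def
    using finSg finOI by (subst card_SigmaI) auto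
  also have "\<dots> = (\<Sum>j\<in>Sg. (p - 1) * (card R + 1) - 1)"
  proof (rule sum.cong)
    fix j assume j: "j \<in> Sg"
    have "card ({1..<P} \<times> OI R - {(1, unit j)}) = card ({1..<P} \<times> OI R) - 1"
      using Pg1 finOI j SgR by (subst card_Diff_singleton) (auto simp: OI_def)
    also have "card ({1..<P} \<times> OI R) = (p - 1) * (card R + 1)" using finR by (simp only: card_cartesian_product card_OI card1)
    finally show "card ({1..<P} \<times> OI R - {(1, unit j)}) = (p - 1) * (card R + 1) - 1" .
  qed simp
  finally show ?thesis by simp
qed

definition "DD = {(c, v). c \<in> {2..<P} \<and> v \<in> {2..<P} \<and> v \<noteq> c}"

lemma cDD: "card DD = (p - 2) * (p - 3)"
proof -
  have "DD = Sigma {2..<P} (\<lambda>c. {2..<P} - {c})" by (auto simp: DD_def)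
  hence "card DD = (\<Sum>c\<in>{2..<P}. card ({2..<P} - {c}))" by (simp add: card_SigmaI)
  also have "\<dots> = (\<Sum>c\<in>{2..<P}. p - 3)"
    by (rule sum.cong) (auto simp: card_Diff_singleton card2)
  finally show ?thesis using card2 by (simp add: mult.commute)
qed

lemma finDD: "finite DD" unfolding DD_def by (rule finite_subset[of _ "{2..<P} \<times> {2..<P}"]) auto

lemma ndcc: "c \<in> {2..<P} \<Longrightarrow> \<not> P dvd c * c - c"
proof -
  assume c: "c \<in> {2..<P}"
  have "c * c - c = c * (c - 1)" by (simp add: algebra_simps)
  moreover have "\<not> P dvd c" "\<not> P dvd c - 1" using c ndP[of c] ndP[of "c - 1"] by auto
  ultimately show ?thesis using pm by metis
qed

lemma cP4: "card P4 = card Sg * ((p - 2) * (p - 3))"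
proof -
  define X where "X = Sg \<times> DD"
  define Y where "Y = {(x, t). x \<in> X \<and> t \<in> {1..<P} \<and> P dvd (fst (snd x) * fst (snd x) - fst (snd x)) * t
      - (snd (snd x) * snd (snd x) - snd (snd x))}"
  have eq: "P4 = (\<lambda>((j, c, v), \<kappa>). (\<kappa>, sc v j, sc c j)) ` Y"
    by (auto simp: P4_def Y_def X_def DD_def image_iff) blast+
  have inj: "inj_on (\<lambda>((j, c, v), \<kappa>). (\<kappa>, sc v j, sc c j)) Y"
  proof (rule inj_onI, clarsimp)
    fix j c v \<kappa> j' c' v' \<kappa>'
    assume h: "((j, c, v), \<kappa>) \<in> Y" "((j', c', v'), \<kappa>') \<in> Y" "sc v j = sc v' j'" "sc c j = sc c' j'"
    have c0: "c \<noteq> 0" using h(1) by (auto simp: Y_def X_def DD_def)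
    have "sc c j j = sc c' j' j" using h(4) by simp
    hence jj: "j = j'" using c0 by (auto simp: sc_def split: if_splits)
    have "c = c'" using h(4) jj by (metis sc_def)
    moreover have "v = v'" using h(3) jj by (metis sc_def)
    ultimately show "j = j' \<and> c = c' \<and> v = v'" using jj by simp
  qed
  have "card P4 = card Y" by (subst eq) (rule card_image[OF inj])
  also have "\<dots> = card X" unfolding Y_def
  proof (rule count_param1)
    show "finite X" using finSg finDD by (simp add: X_def)
    fix x assume "x \<in> X"
    hence "fst (snd x) \<in> {2..<P}" "snd (snd x) \<in> {2..<P}" by (auto simp: X_def DD_def)
    thus "\<not> P dvd fst (snd x) * fst (snd x) - fst (snd x)" "\<not> P dvd snd (snd x) * snd (snd x) - snd (snd x)"
      using ndcc by auto
  qed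
  also have "\<dots> = card Sg * ((p - 2) * (p - 3))" by (simp add: X_def card_cartesian_product cDD)
  finally show ?thesis .
qed

definition "Sp = {(i, j). i \<in> Sg \<and> j \<in> Sg \<and> i < j}"

lemma card_Sp: "card Sp = card Sg choose 2"
proof -
  have "bij_betw (\<lambda>(i, j). {i, j}) Sp {B. B \<subseteq> Sg \<and> card B = 2}"
  proof (rule bij_betw_imageI)
    show "inj_on (\<lambda>(i, j). {i, j}) Sp"
      by (auto simp: inj_on_def Sp_def doubleton_eq_iff)
    show "(\<lambda>(i, j). {i, j}) ` Sp = {B. B \<subseteq> Sg \<and> card B = 2}"
    proof
      show "(\<lambda>(i, j). {i, j}) ` Sp \<subseteq> {B. B \<subseteq> Sg \<and> card B = 2}" by (auto simp: Sp_def)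
      show "{B. B \<subseteq> Sg \<and> card B = 2} \<subseteq> (\<lambda>(i, j). {i, j}) ` Sp"
      proof
        fix B assume "B \<in> {B. B \<subseteq> Sg \<and> card B = 2}"
        then obtain x y where B: "B = {x, y}" "x \<noteq> y" "B \<subseteq> Sg" by (auto simp: card_2_iff)
        show "B \<in> (\<lambda>(i, j). {i, j}) ` Sp"
        proof (cases "x < y")
          case True thus ?thesis using B by (auto simp: Sp_def image_iff intro!: bexI[where x = "(x, y)"])
        next
          case False hence "y < x" using B by auto
          thus ?thesis using B by (auto simp: Sp_def image_iff intro!: bexI[where x = "(y, x)"])
        qed
      qed
    qed
  qed
  hence "card Sp = card {B. B \<subseteq> Sg \<and> card B = 2}" by (rule bij_betw_same_card)
  thus ?thesis using finSg by (simp add: n_subsets)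
qed

lemma finSp: "finite Sp"
proof -
  have "Sp \<subseteq> Sg \<times> Sg" by (auto simp: Sp_def)
  thus ?thesis using finSg finite_subset by blast
qed

lemma tw_nz: "c \<in> {2..<P} \<Longrightarrow> i \<noteq> j \<Longrightarrow> tw P c i j s \<noteq> 0 \<longleftrightarrow> s = i \<or> s = j"
  by (auto simp: tw_def)

lemma tw_supp: "c \<in> {2..<P} \<Longrightarrow> i \<noteq> j \<Longrightarrow> {s. tw P c i j s \<noteq> 0} = {i, j}"
  using tw_nz by blast

lemma cP5: "card P5 = (card Sg choose 2) * ((p - 2) * (p - 3))"
proof -
  define X where "X = Sp \<times> DD"
  define Y where "Y = {(x, t). x \<in> X \<and> t \<in> {1..<P} \<and> P dvd (fst (snd x) * fst (snd x) - fst (snd x)) * t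
      - (snd (snd x) * snd (snd x) - snd (snd x))}"
  have eq: "P5 = (\<lambda>(((i, j), c, v), \<kappa>). (\<kappa>, tw P v i j, tw P c i j)) ` Y"
  proof
    show "P5 \<subseteq> (\<lambda>(((i, j), c, v), \<kappa>). (\<kappa>, tw P v i j, tw P c i j)) ` Y"
    proof
      fix z assume "z \<in> P5"
      then obtain \<kappa> v c i j where z: "z = (\<kappa>, tw P v i j, tw P c i j)" and h: "i \<in> Sg" "j \<in> Sg" "i < j" "c \<in> {2..<P}" "v \<in> {2..<P}" "v \<noteq> c"
        "\<kappa> \<in> {1..<P}" "P dvd (c * c - c) * \<kappa> - (v * v - v)" unfolding P5_def by blast
      show "z \<in> (\<lambda>(((i, j), c, v), \<kappa>). (\<kappa>, tw P v i j, tw P c i j)) ` Y"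
        by (rule image_eqI[where x = "(((i, j), c, v), \<kappa>)"]) (use z h in \<open>auto simp: Y_def X_def Sp_def DD_def\<close>)
    qed
    show "(\<lambda>(((i, j), c, v), \<kappa>). (\<kappa>, tw P v i j, tw P c i j)) ` Y \<subseteq> P5"
      unfolding P5_def Y_def X_def Sp_def DD_def by fastforce
  qed
  have inj: "inj_on (\<lambda>(((i, j), c, v), \<kappa>). (\<kappa>, tw P v i j, tw P c i j)) Y"
  proof (rule inj_onI, clarsimp)
    fix i j c v \<kappa> i' j' c' v' \<kappa>'
    assume h: "(((i, j), c, v), \<kappa>) \<in> Y" "(((i', j'), c', v'), \<kappa>') \<in> Y" "tw P v i j = tw P v' i' j'" "tw P c i j = tw P c' i' j'"
    have r: "i < j" "i' < j'" "c \<in> {2..<P}" "c' \<in> {2..<P}" using h(1,2) by (auto simp: Y_def X_def Sp_def DD_def)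
    have "{i, j} = {i', j'}" using tw_supp[of c i j] tw_supp[of c' i' j'] r h(4) by auto
    hence ij: "i = i'" "j = j'" using r by (auto simp: doubleton_eq_iff)
    have "c = c'" using fun_cong[OF h(4), of i] ij by (simp add: tw_def)
    moreover have "v = v'" using fun_cong[OF h(3), of i] ij by (simp add: tw_def)
    ultimately show "i = i' \<and> j = j' \<and> c = c' \<and> v = v'" using ij by simp
  qed
  have "card P5 = card Y" by (subst eq) (rule card_image[OF inj])
  also have "\<dots> = card X" unfolding Y_def
  proof (rule count_param1)
    show "finite X" using finSp finDD by (simp add: X_def)
    fix x assume "x \<in> X"
    hence "fst (snd x) \<in> {2..<P}" "snd (snd x) \<in> {2..<P}" by (auto simp: X_def DD_def)
    thus "\<not> P dvd fst (snd x) * fst (snd x) - fst (snd x)" "\<not> P dvd snd (snd x) * snd (snd x) - snd (snd x)"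
      using ndcc by auto
  qed
  also have "\<dots> = (card Sg choose 2) * ((p - 2) * (p - 3))" by (simp add: X_def card_cartesian_product cDD card_Sp)
  finally show ?thesis .
qed

lemma finC2: "finite C2"
proof -
  have "C2 \<subseteq> Pr \<times> ext R Pr \<times> ext Sg Pr" by (auto simp: C2_def)
  moreover have "finite (Pr \<times> ext R Pr \<times> ext Sg Pr)" using finR finSg finite_ext by auto
  ultimately show ?thesis using finite_subset by blast
qed

lemma shapes:
  "z \<in> P0 \<Longrightarrow> fst z = 0"
  "z \<in> P1 \<Longrightarrow> fst z = 1 \<and> fst (snd z) = snd (snd z)"
  "z \<in> P2 \<Longrightarrow> fst z \<ge> 1 \<and> \<not> (fst z = 1 \<and> fst (snd z) = snd (snd z)) \<and> snd (snd z) = (\<lambda>_. 0)"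
  "z \<in> P3 \<Longrightarrow> fst z \<ge> 1 \<and> \<not> (fst z = 1 \<and> fst (snd z) = snd (snd z)) \<and> (\<exists>j. snd (snd z) = unit j)"
  "z \<in> P4 \<Longrightarrow> fst z \<ge> 1 \<and> \<not> (fst z = 1 \<and> fst (snd z) = snd (snd z)) \<and> (\<exists>j c. c \<in> {2..<P} \<and> snd (snd z) = sc c j)"
  "z \<in> P5 \<Longrightarrow> fst z \<ge> 1 \<and> \<not> (fst z = 1 \<and> fst (snd z) = snd (snd z)) \<and> (\<exists>i j c. i < j \<and> c \<in> {2..<P} \<and> snd (snd z) = tw P c i j)"
proof -
  show "z \<in> P0 \<Longrightarrow> fst z = 0" by (auto simp: P0_def)
  show "z \<in> P1 \<Longrightarrow> fst z = 1 \<and> fst (snd z) = snd (snd z)" by (auto simp: P1_def)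
  show "z \<in> P2 \<Longrightarrow> fst z \<ge> 1 \<and> \<not> (fst z = 1 \<and> fst (snd z) = snd (snd z)) \<and> snd (snd z) = (\<lambda>_. 0)"
    by (auto simp: P2_def)
  show "z \<in> P3 \<Longrightarrow> fst z \<ge> 1 \<and> \<not> (fst z = 1 \<and> fst (snd z) = snd (snd z)) \<and> (\<exists>j. snd (snd z) = unit j)"
    by (auto simp: P3_def)
  show "z \<in> P4 \<Longrightarrow> fst z \<ge> 1 \<and> \<not> (fst z = 1 \<and> fst (snd z) = snd (snd z)) \<and> (\<exists>j c. c \<in> {2..<P} \<and> snd (snd z) = sc c j)"
  proof -
    assume "z \<in> P4"
    then obtain \<kappa> v c j where z: "z = (\<kappa>, sc v j, sc c j)" and h: "c \<in> {2..<P}" "v \<noteq> c" "\<kappa> \<in> {1..<P}"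
      unfolding P4_def by blast
    have "sc v j j \<noteq> sc c j j" using h by (simp add: sc_def)
    hence "sc v j \<noteq> sc c j" by metis
    thus ?thesis using z h by auto
  qed
  show "z \<in> P5 \<Longrightarrow> fst z \<ge> 1 \<and> \<not> (fst z = 1 \<and> fst (snd z) = snd (snd z)) \<and> (\<exists>i j c. i < j \<and> c \<in> {2..<P} \<and> snd (snd z) = tw P c i j)"
  proof -
    assume "z \<in> P5"
    then obtain \<kappa> v c i j where z: "z = (\<kappa>, tw P v i j, tw P c i j)" and h: "i < j" "c \<in> {2..<P}" "v \<noteq> c" "\<kappa> \<in> {1..<P}"
      unfolding P5_def by blast
    have "tw P v i j i \<noteq> tw P c i j i" using h by (simp add: tw_def)
    hence "tw P v i j \<noteq> tw P c i j" by metis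
    thus ?thesis using z h by auto
  qed
qed

lemma sh_disj:
  "unit j \<noteq> (\<lambda>_. 0)"
  "c \<in> {2..<P} \<Longrightarrow> sc c j \<noteq> (\<lambda>_. 0)"
  "c \<in> {2..<P} \<Longrightarrow> i < j \<Longrightarrow> tw P c i j \<noteq> (\<lambda>_. 0)"
  "c \<in> {2..<P} \<Longrightarrow> unit j' \<noteq> sc c j"
  "c \<in> {2..<P} \<Longrightarrow> i < j \<Longrightarrow> unit j' \<noteq> tw P c i j"
  "c \<in> {2..<P} \<Longrightarrow> c' \<in> {2..<P} \<Longrightarrow> i < j \<Longrightarrow> sc c' j' \<noteq> tw P c i j"
proof -
  show "unit j \<noteq> (\<lambda>_. 0)" by (rule unit_ne0)
  show "c \<in> {2..<P} \<Longrightarrow> sc c j \<noteq> (\<lambda>_. 0)" by (auto simp: sc_def fun_eq_iff)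
  show "c \<in> {2..<P} \<Longrightarrow> i < j \<Longrightarrow> tw P c i j \<noteq> (\<lambda>_. 0)"
    by (auto simp: tw_def fun_eq_iff intro!: exI[where x = i])
  show "c \<in> {2..<P} \<Longrightarrow> unit j' \<noteq> sc c j"
  proof
    assume "c \<in> {2..<P}" "unit j' = sc c j"
    hence "unit j' j = c" by (simp add: sc_def)
    thus False using \<open>c \<in> {2..<P}\<close> by (auto simp: unit_def split: if_splits)
  qed
  show "c \<in> {2..<P} \<Longrightarrow> i < j \<Longrightarrow> unit j' \<noteq> tw P c i j"
  proof
    assume "c \<in> {2..<P}" "i < j" "unit j' = tw P c i j"
    hence "unit j' i = c" by (simp add: tw_def)
    thus False using \<open>c \<in> {2..<P}\<close> by (auto simp: unit_def split: if_splits)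
  qed
  show "c \<in> {2..<P} \<Longrightarrow> c' \<in> {2..<P} \<Longrightarrow> i < j \<Longrightarrow> sc c' j' \<noteq> tw P c i j"
  proof
    assume h: "c \<in> {2..<P}" "c' \<in> {2..<P}" "i < j" "sc c' j' = tw P c i j"
    have "tw P c i j i \<noteq> 0" "tw P c i j j \<noteq> 0" using tw_nz[of c i j] h by auto
    hence "sc c' j' i \<noteq> 0" "sc c' j' j \<noteq> 0" using h(4) by auto
    hence "i = j'" "j = j'" by (auto simp: sc_def split: if_splits)
    thus False using h(3) by simp
  qed
qed

lemma disjs:
  "P0 \<inter> P1 = {}" "P0 \<inter> P2 = {}" "P0 \<inter> P3 = {}" "P0 \<inter> P4 = {}" "P0 \<inter> P5 = {}"
  "P1 \<inter> P2 = {}" "P1 \<inter> P3 = {}" "P1 \<inter> P4 = {}" "P1 \<inter> P5 = {}"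
  "P2 \<inter> P3 = {}" "P2 \<inter> P4 = {}" "P2 \<inter> P5 = {}"
  "P3 \<inter> P4 = {}" "P3 \<inter> P5 = {}" "P4 \<inter> P5 = {}"
proof -
  note sh = shapes
  show "P0 \<inter> P1 = {}" using sh(1,2) by fastforce
  show "P0 \<inter> P2 = {}" using sh(1,3) by fastforce
  show "P0 \<inter> P3 = {}" using sh(1,4) by fastforce
  show "P0 \<inter> P4 = {}" using sh(1,5) by fastforce
  show "P0 \<inter> P5 = {}" using sh(1,6) by fastforce
  show "P1 \<inter> P2 = {}" using sh(2,3) by blast
  show "P1 \<inter> P3 = {}" using sh(2,4) by blast
  show "P1 \<inter> P4 = {}" using sh(2,5) by blast
  show "P1 \<inter> P5 = {}" using sh(2,6) by blast
  show "P2 \<inter> P3 = {}" using sh(3,4) sh_disj(1) by (metis disjoint_iff)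
  show "P2 \<inter> P4 = {}" using sh(3,5) sh_disj(2) by (metis disjoint_iff)
  show "P2 \<inter> P5 = {}" using sh(3,6) sh_disj(3) by (metis disjoint_iff)
  show "P3 \<inter> P4 = {}" using sh(4,5) sh_disj(4) by (metis disjoint_iff)
  show "P3 \<inter> P5 = {}" using sh(4,6) sh_disj(5) by (metis disjoint_iff)
  show "P4 \<inter> P5 = {}" using sh(5,6) sh_disj(6) by (metis disjoint_iff)
qed

lemma card_C2: "card C2 = card P0 + card P1 + card P2 + card P3 + card P4 + card P5"
proof -
  have f: "finite P0" "finite P1" "finite P2" "finite P3" "finite P4" "finite P5"
    using finC2 C2_eq by (auto intro: finite_subset)
  have "card C2 = card (P0 \<union> P1 \<union> P2 \<union> P3 \<union> P4 \<union> P5)" using C2_eq by simp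
  also have "\<dots> = card (P0 \<union> P1 \<union> P2 \<union> P3 \<union> P4) + card P5"
    using f disjs by (intro card_Un_disjoint) auto
  also have "card (P0 \<union> P1 \<union> P2 \<union> P3 \<union> P4) = card (P0 \<union> P1 \<union> P2 \<union> P3) + card P4"
    using f disjs by (intro card_Un_disjoint) auto
  also have "card (P0 \<union> P1 \<union> P2 \<union> P3) = card (P0 \<union> P1 \<union> P2) + card P3"
    using f disjs by (intro card_Un_disjoint) auto
  also have "card (P0 \<union> P1 \<union> P2) = card (P0 \<union> P1) + card P2"
    using f disjs by (intro card_Un_disjoint) auto
  also have "card (P0 \<union> P1) = card P0 + card P1"
    using f disjs by (intro card_Un_disjoint) auto
  finally show ?thesis .
qed

end

definition hh :: "(nat \<Rightarrow> int) \<Rightarrow> (nat \<Rightarrow> int) \<Rightarrow> nat \<Rightarrow> nat \<Rightarrow> int" where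
  "hh e t i j = (if i = j then (2 * e i - 1) * t i else e i * t j + e j * t i)"

definition pr :: "int \<Rightarrow> nat \<Rightarrow> int \<Rightarrow> nat \<Rightarrow> nat \<Rightarrow> int" where
  "pr a l b j = (\<lambda>s. if s = l then a else if s = j then b else 0)"

context CC begin

definition C3 :: "(int \<times> (nat \<Rightarrow> int) \<times> (nat \<Rightarrow> int) \<times> (nat \<Rightarrow> int)) set" where
  "C3 = {(\<kappa>, \<alpha>, e, t). \<kappa> \<in> Pr \<and> \<alpha> \<in> ext R Pr \<and> e \<in> OI Sg \<and> t \<in> ext Sg Pr \<and>
     (\<forall>i\<in>R. \<forall>j\<in>R. P dvd gg \<alpha> i j - \<kappa> * hh e t i j)}"

definition "Q0 = {(0::int, \<alpha>, e, t) | \<alpha> e t. \<alpha> \<in> OI R \<and> e \<in> OI Sg \<and> t \<in> ext Sg Pr}"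
definition "Q1 = {(\<kappa>, \<alpha>, \<lambda>_::nat. 0::int, \<lambda>_::nat. 0::int) | \<kappa> \<alpha>. \<kappa> \<in> {1..<P} \<and> \<alpha> \<in> OI (R - Sg)}"
definition "Q1c = {(\<kappa>, sc v l, \<lambda>_::nat. 0::int, sc t l) | \<kappa> l v t. \<kappa> \<in> {1..<P} \<and> l \<in> Sg \<and> v \<in> {1..<P} \<and> t \<in> Pr
   \<and> P dvd \<kappa> * t - (v - v * v)}"
definition "Q2 = {(\<kappa>, sc v j, unit j, sc t j) | \<kappa> j v t. \<kappa> \<in> {1..<P} \<and> j \<in> Sg \<and> v \<in> Pr \<and> t \<in> Pr
   \<and> P dvd \<kappa> * t - (v * v - v)}"
definition "Q3 = {(\<kappa>, unit l, unit j, \<lambda>_::nat. 0::int) | \<kappa> j l. \<kappa> \<in> {1..<P} \<and> j \<in> Sg \<and> l \<in> R - Sg}"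
definition "Q4 = {(\<kappa>, pr v l ((1 - v) mod P) j, unit j, pr t l ((- t) mod P) j) | \<kappa> j l v t.
   \<kappa> \<in> {1..<P} \<and> j \<in> Sg \<and> l \<in> Sg \<and> l \<noteq> j \<and> v \<in> {1..<P} \<and> t \<in> Pr \<and> P dvd \<kappa> * t - (v - v * v)}"

lemma hh_zero: "hh (\<lambda>_. 0) t i j = (if i = j then - t i else 0)"
  by (simp add: hh_def)

lemma C3_sub: "C3 \<subseteq> Q0 \<union> Q1 \<union> Q1c \<union> Q2 \<union> Q3 \<union> Q4"
proof
  fix z assume "z \<in> C3"
  then obtain \<kappa> \<alpha> e t where z: "z = (\<kappa>, \<alpha>, e, t)" and kP: "\<kappa> \<in> Pr" and ae: "\<alpha> \<in> ext R Pr" and eO: "e \<in> OI Sg"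
    and te: "t \<in> ext Sg Pr" and H: "\<forall>i\<in>R. \<forall>j\<in>R. P dvd gg \<alpha> i j - \<kappa> * hh e t i j" by (auto simp: C3_def)
  have aP: "\<And>s. \<alpha> s \<in> Pr" using ae ext_allP by blast
  have tP: "\<And>s. t s \<in> Pr" using te ext_allP by blast
  have aR: "\<And>s. s \<notin> R \<Longrightarrow> \<alpha> s = 0" using ae by (auto simp: ext_def)
  have tS: "\<And>s. s \<notin> Sg \<Longrightarrow> t s = 0" using te by (auto simp: ext_def)
  show "z \<in> Q0 \<union> Q1 \<union> Q1c \<union> Q2 \<union> Q3 \<union> Q4"
  proof (cases "\<kappa> = 0")
    case True
    hence "\<forall>i\<in>R. \<forall>j\<in>R. P dvd gg \<alpha> i j" using H by simp
    hence "\<alpha> \<in> OI R" using OI_char ae by blast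
    thus ?thesis using True eO te by (auto simp: z Q0_def)
  next
    case False
    hence k: "\<kappa> \<in> {1..<P}" using kP by auto
    have kn: "\<not> P dvd \<kappa>" using k ndP[of \<kappa>] by auto
    have kt0: "t m = 0" if "P dvd \<kappa> * t m" for m
    proof -
      have "P dvd t m" using that kn pm by blast
      thus ?thesis using zP tP by blast
    qed
    show ?thesis
    proof (cases "e = (\<lambda>_. 0)")
      case e0: True
      have Off: "P dvd \<alpha> i * \<alpha> m" if "i \<in> R" "m \<in> R" "i \<noteq> m" for i m
        using H that e0 by (metis gg_diff hh_zero diff_zero mult_zero_right)
      have Di: "P dvd (\<alpha> i * \<alpha> i - \<alpha> i) + \<kappa> * t i" if "i \<in> R" for i
        using H that e0 by (metis gg_same hh_zero diff_minus_eq_add mult_minus_right)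
      show ?thesis
      proof (cases "\<forall>s. \<alpha> s = 0")
        case True
        hence a0: "\<alpha> = (\<lambda>_. 0)" by auto
        have "t m = 0" for m
        proof (cases "m \<in> Sg")
          case True
          hence mR: "m \<in> R" using SgR by blast
          have "P dvd \<kappa> * t m" using Di[OF mR] a0 by simp
          thus ?thesis by (rule kt0)
        qed (use tS in blast)
        hence "t = (\<lambda>_. 0)" by auto
        moreover have "(\<lambda>_. 0) \<in> OI (R - Sg)" by (simp add: OI_def)
        ultimately show ?thesis using a0 e0 k by (auto simp: z Q1_def)
      next
        case False
        then obtain l where l: "\<alpha> l \<noteq> 0" by blast
        have lR: "l \<in> R" using aR l by blast
        have am: "\<alpha> m = 0" if "m \<noteq> l" for m
        proof (cases "m \<in> R")
          case True
          have "P dvd \<alpha> m * \<alpha> l" using Off[OF True lR that] .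
          hence "P dvd \<alpha> m" using pm ndP[OF aP l] by blast
          thus ?thesis using zP aP by blast
        qed (use aR in blast)
        have tm: "t m = 0" if "m \<noteq> l" for m
        proof (cases "m \<in> Sg")
          case True
          hence mR: "m \<in> R" using SgR by blast
          have "P dvd \<kappa> * t m" using Di[OF mR] am[OF that] by simp
          thus ?thesis by (rule kt0)
        qed (use tS in blast)
        show ?thesis
        proof (cases "l \<in> Sg")
          case False
          hence "t l = 0" using tS by blast
          hence "P dvd \<alpha> l * (\<alpha> l - 1)" using Di[OF lR] by (simp add: algebra_simps)
          hence "P dvd \<alpha> l - 1" using pm ndP[OF aP l] by blast
          hence "\<alpha> l = 1" using eqP[of "\<alpha> l" 1] aP Pg1 by auto
          hence "\<alpha> = unit l" using am by (auto simp: unit_def fun_eq_iff)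
          moreover have "t = (\<lambda>_. 0)" using tm \<open>t l = 0\<close> by (metis ext)
          moreover have "unit l \<in> OI (R - Sg)" using lR False by (simp add: OI_def)
          ultimately show ?thesis using e0 k by (auto simp: z Q1_def)
        next
          case True
          have "\<alpha> = sc (\<alpha> l) l" using am by (auto simp: sc_def fun_eq_iff)
          moreover have "t = sc (t l) l" using tm by (auto simp: sc_def fun_eq_iff)
          moreover have "\<alpha> l \<in> {1..<P}" using aP[of l] l by auto
          moreover have "P dvd \<kappa> * t l - (\<alpha> l - \<alpha> l * \<alpha> l)"
          proof -
            have e: "\<kappa> * t l - (\<alpha> l - \<alpha> l * \<alpha> l) = (\<alpha> l * \<alpha> l - \<alpha> l) + \<kappa> * t l" by simp
            show ?thesis unfolding e using Di[OF lR] .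
          qed
          ultimately show ?thesis using e0 k True tP[of l] unfolding z Q1c_def by blast
        qed
      qed
    next
      case False
      then obtain j where eu: "e = unit j" and jS: "j \<in> Sg" using eO by (auto simp: OI_def)
      have jR: "j \<in> R" using jS SgR by blast
      have hhu: "hh e t i m = (if i = m then (if i = j then t i else - t i) else (if i = j then t m else if m = j then t i else 0))" for i m
        unfolding eu hh_def unit_def by auto
      have Off: "P dvd \<alpha> i * \<alpha> m" if "i \<in> R" "m \<in> R" "i \<noteq> m" "i \<noteq> j" "m \<noteq> j" for i m
        using H that hhu[of i m] by (metis gg_diff diff_zero mult_zero_right)
      have Dm: "P dvd (\<alpha> i * \<alpha> i - \<alpha> i) + \<kappa> * t i" if "i \<in> R" "i \<noteq> j" for i
        using H that hhu[of i i] by (metis gg_same diff_minus_eq_add mult_minus_right)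
      have Dj: "P dvd (\<alpha> j * \<alpha> j - \<alpha> j) - \<kappa> * t j"
        using H jR hhu[of j j] by (metis gg_same)
      have Ojl: "P dvd \<alpha> j * \<alpha> i - \<kappa> * t i" if "i \<in> R" "i \<noteq> j" for i
        using H that jR hhu[of j i] by (metis gg_diff)
      show ?thesis
      proof (cases "\<forall>m. m \<noteq> j \<longrightarrow> \<alpha> m = 0")
        case True
        have tm: "t m = 0" if "m \<noteq> j" for m
        proof (cases "m \<in> Sg")
          case True2: True
          hence "m \<in> R" using SgR by blast
          hence "P dvd \<kappa> * t m" using Dm[of m] that True by simp
          thus ?thesis by (rule kt0)
        qed (use tS in blast)
        have "\<alpha> = sc (\<alpha> j) j" using True by (auto simp: sc_def fun_eq_iff)
        moreover have "t = sc (t j) j" using tm by (auto simp: sc_def fun_eq_iff)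
        moreover have "P dvd \<kappa> * t j - (\<alpha> j * \<alpha> j - \<alpha> j)" using Dj by (metis dvd_minus_iff minus_diff_eq)
        ultimately show ?thesis using eu k jS aP[of j] tP[of j] unfolding z Q2_def by blast
      next
        case False
        then obtain l where lj: "l \<noteq> j" and l: "\<alpha> l \<noteq> 0" by blast
        have lR: "l \<in> R" using aR l by blast
        have lnd: "\<not> P dvd \<alpha> l" using ndP[OF aP l] .
        have am: "\<alpha> m = 0" if "m \<noteq> l" "m \<noteq> j" for m
        proof (cases "m \<in> R")
          case True
          have "P dvd \<alpha> m * \<alpha> l" using Off[OF True lR that(1) that(2) lj] .
          hence "P dvd \<alpha> m" using pm lnd by blast
          thus ?thesis using zP aP by blast
        qed (use aR in blast)
        have tm: "t m = 0" if "m \<noteq> l" "m \<noteq> j" for m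
        proof (cases "m \<in> Sg")
          case True
          hence "m \<in> R" using SgR by blast
          hence "P dvd \<kappa> * t m" using Dm[of m] am[OF that] that by simp
          thus ?thesis by (rule kt0)
        qed (use tS in blast)
        have "P dvd (\<alpha> j * \<alpha> l - \<kappa> * t l) + ((\<alpha> l * \<alpha> l - \<alpha> l) + \<kappa> * t l)"
          using Ojl[OF lR lj] Dm[OF lR lj] by (rule dvd_add)
        moreover have "(\<alpha> j * \<alpha> l - \<kappa> * t l) + ((\<alpha> l * \<alpha> l - \<alpha> l) + \<kappa> * t l) = \<alpha> l * (\<alpha> j + \<alpha> l - 1)"
          by (simp add: algebra_simps)
        ultimately have "P dvd \<alpha> l * (\<alpha> j + \<alpha> l - 1)" by simp
        hence ajl: "P dvd \<alpha> j + \<alpha> l - 1" using pm lnd by blast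
        show ?thesis
        proof (cases "l \<in> Sg")
          case False
          hence tl: "t l = 0" using tS by blast
          hence "P dvd \<alpha> l * (\<alpha> l - 1)" using Dm[OF lR lj] by (simp add: algebra_simps)
          hence "P dvd \<alpha> l - 1" using pm lnd by blast
          hence l1: "\<alpha> l = 1" using eqP[of "\<alpha> l" 1] aP Pg1 by auto
          hence "\<alpha> j = 0" using ajl zP aP by simp
          hence "P dvd \<kappa> * t j" using Dj by simp
          hence tj: "t j = 0" by (rule kt0)
          have "\<alpha> = unit l" using am l1 \<open>\<alpha> j = 0\<close> by (auto simp: unit_def fun_eq_iff)
          moreover have "t = (\<lambda>_. 0)" using tm tl tj by (metis ext)
          ultimately show ?thesis using eu k jS lR False unfolding z Q3_def by blast
        next
          case True
          define v where "v = \<alpha> l"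
          define tt where "tt = t l"
          have vP: "v \<in> {1..<P}" using aP[of l] l by (auto simp: v_def)
          have ajv: "\<alpha> j = (1 - v) mod P"
          proof -
            have "P dvd \<alpha> j - (1 - v)" using ajl by (simp add: v_def algebra_simps)
            hence "\<alpha> j mod P = (1 - v) mod P" by (simp add: mod_eq_dvd_iff)
            thus ?thesis using aP[of j] by simp
          qed
          have dl: "P dvd \<kappa> * tt - (v - v * v)"
          proof -
            have e: "\<kappa> * tt - (v - v * v) = (\<alpha> l * \<alpha> l - \<alpha> l) + \<kappa> * t l" by (simp add: v_def tt_def)
            show ?thesis unfolding e using Dm[OF lR lj] .
          qed
          have tj: "t j = (- tt) mod P"
          proof -
            have e1: "P dvd \<alpha> j - (1 - v)" using ajl by (simp add: v_def algebra_simps)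
            have "(\<alpha> j * \<alpha> j - \<alpha> j - \<kappa> * t j) - (\<alpha> j - (1 - v)) * (\<alpha> j - v) - (\<kappa> * tt - (v - v * v))
                 = - (\<kappa> * (t j + tt))" by (simp add: algebra_simps)
            moreover have "P dvd (\<alpha> j * \<alpha> j - \<alpha> j - \<kappa> * t j) - (\<alpha> j - (1 - v)) * (\<alpha> j - v) - (\<kappa> * tt - (v - v * v))"
              using dvd_diff[OF dvd_diff[OF Dj dvd_mult2[OF e1]] dl] by simp
            ultimately have "P dvd \<kappa> * (t j + tt)" by (metis dvd_minus_iff)
            hence "P dvd t j + tt" using pm kn by blast
            hence "P dvd t j - (- tt)" by simp
            hence "t j mod P = (- tt) mod P" by (simp add: mod_eq_dvd_iff)
            thus ?thesis using tP[of j] by simp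
          qed
          have "\<alpha> = pr v l ((1 - v) mod P) j" using am ajv lj by (auto simp: pr_def fun_eq_iff v_def)
          moreover have "t = pr tt l ((- tt) mod P) j" using tm tj lj by (auto simp: pr_def fun_eq_iff tt_def)
          ultimately show ?thesis using eu k jS True lj vP tP[of l] dl unfolding z Q4_def tt_def by blast
        qed
      qed
    qed
  qed
qed

lemma OI_sub: "I \<subseteq> J \<Longrightarrow> \<alpha> \<in> OI I \<Longrightarrow> \<alpha> \<in> OI J"
  by (auto simp: OI_def)

lemma pr_ext: "l \<in> I \<Longrightarrow> j \<in> I \<Longrightarrow> a \<in> Pr \<Longrightarrow> b \<in> Pr \<Longrightarrow> pr a l b j \<in> ext I Pr"
  using Pg1 by (auto simp: ext_def pr_def)

lemma C3_sup: "Q0 \<union> Q1 \<union> Q1c \<union> Q2 \<union> Q3 \<union> Q4 \<subseteq> C3"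
proof -
  have k0: "(0::int) \<in> Pr" using Pg1 by auto
  have z0: "(\<lambda>_::nat. 0::int) \<in> ext I Pr" for I using Pg1 by (auto simp: ext_def)
  have O0: "(\<lambda>_::nat. 0::int) \<in> OI I" for I by (simp add: OI_def)
  have "Q0 \<subseteq> C3" using OI_gg OI_ext k0 by (auto simp: Q0_def C3_def)
  moreover have "Q1 \<subseteq> C3"
  proof
    fix z assume "z \<in> Q1"
    then obtain \<kappa> \<alpha> where z: "z = (\<kappa>, \<alpha>, \<lambda>_. 0, \<lambda>_. 0)" and k: "\<kappa> \<in> {1..<P}" and a: "\<alpha> \<in> OI (R - Sg)"
      by (auto simp: Q1_def)
    have aR: "\<alpha> \<in> OI R" using OI_sub[OF _ a] by blast
    show "z \<in> C3" using OI_gg[OF aR] OI_ext[OF aR] k z0 O0 by (auto simp: z C3_def hh_def)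
  qed
  moreover have "Q1c \<subseteq> C3"
  proof
    fix z assume "z \<in> Q1c"
    then obtain \<kappa> l v t where z: "z = (\<kappa>, sc v l, \<lambda>_. 0, sc t l)" and h: "\<kappa> \<in> {1..<P}" "l \<in> Sg" "v \<in> {1..<P}" "t \<in> Pr"
      "P dvd \<kappa> * t - (v - v * v)" by (auto simp: Q1c_def)
    have d: "P dvd (v * v - v) - \<kappa> * ((2 * 0 - 1) * t)"
    proof -
      have e: "(v * v - v) - \<kappa> * ((2 * 0 - 1) * t) = \<kappa> * t - (v - v * v)" by (simp add: algebra_simps)
      show ?thesis unfolding e using h(5) .
    qed
    have "P dvd gg (sc v l) s u - \<kappa> * hh (\<lambda>_. 0) (sc t l) s u" for s u
      using d by (auto simp: gg_def hh_def sc_def)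
    thus "z \<in> C3" using h sc_ext[of l R v] sc_ext[of l Sg t] SgR O0 by (auto simp: z C3_def)
  qed
  moreover have "Q2 \<subseteq> C3"
  proof
    fix z assume "z \<in> Q2"
    then obtain \<kappa> j v t where z: "z = (\<kappa>, sc v j, unit j, sc t j)" and h: "\<kappa> \<in> {1..<P}" "j \<in> Sg" "v \<in> Pr" "t \<in> Pr"
      "P dvd \<kappa> * t - (v * v - v)" by (auto simp: Q2_def)
    have d: "P dvd (v * v - v) - \<kappa> * ((2 * 1 - 1) * t)"
      using h(5) by (metis dvd_minus_iff minus_diff_eq mult_1 diff_self mult_2 add_diff_cancel_right')
    have "P dvd gg (sc v j) s u - \<kappa> * hh (unit j) (sc t j) s u" for s u
      using d by (auto simp: gg_def hh_def sc_def unit_def)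
    moreover have "unit j \<in> OI Sg" using h by (simp add: OI_def)
    ultimately show "z \<in> C3" using h sc_ext[of j R v] sc_ext[of j Sg t] SgR by (auto simp: z C3_def)
  qed
  moreover have "Q3 \<subseteq> C3"
  proof
    fix z assume "z \<in> Q3"
    then obtain \<kappa> j l where z: "z = (\<kappa>, unit l, unit j, \<lambda>_. 0)" and h: "\<kappa> \<in> {1..<P}" "j \<in> Sg" "l \<in> R - Sg"
      by (auto simp: Q3_def)
    have "gg (unit l) s u - \<kappa> * hh (unit j) (\<lambda>_. 0) s u = 0" for s u
      by (auto simp: gg_def hh_def unit_def)
    moreover have "unit j \<in> OI Sg" using h by (simp add: OI_def)
    ultimately show "z \<in> C3" using h unit_ext[of l R] z0 by (auto simp: z C3_def)
  qed
  moreover have "Q4 \<subseteq> C3"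
  proof
    fix z assume "z \<in> Q4"
    then obtain \<kappa> j l v t where z: "z = (\<kappa>, pr v l ((1 - v) mod P) j, unit j, pr t l ((- t) mod P) j)" and
      h: "\<kappa> \<in> {1..<P}" "j \<in> Sg" "l \<in> Sg" "l \<noteq> j" "v \<in> {1..<P}" "t \<in> Pr" "P dvd \<kappa> * t - (v - v * v)"
      unfolding Q4_def by blast
    define a where "a = (1 - v) mod P"
    define b where "b = (- t) mod P"
    have ea: "P dvd a - (1 - v)" unfolding a_def by (subst mod_eq_dvd_iff[symmetric]) simp
    have eb: "P dvd b + t" unfolding b_def using mod_eq_dvd_iff[of b P "- t"] by (simp add: b_def)
    have aP: "a \<in> Pr" "b \<in> Pr" using Pg1 by (auto simp: a_def b_def)
    have dl: "P dvd (v * v - v) - \<kappa> * ((2 * 0 - 1) * t)"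
    proof -
      have e: "(v * v - v) - \<kappa> * ((2 * 0 - 1) * t) = \<kappa> * t - (v - v * v)" by (simp add: algebra_simps)
      show ?thesis unfolding e using h(7) .
    qed
    have dj: "P dvd (a * a - a) - \<kappa> * ((2 * 1 - 1) * b)"
    proof -
      have e: "(a * a - a) - \<kappa> * ((2 * 1 - 1) * b) = (a - (1 - v)) * (a - v) - \<kappa> * (b + t) + (\<kappa> * t - (v - v * v))"
        by (simp add: algebra_simps)
      show ?thesis unfolding e
        using dvd_add[OF dvd_diff[OF dvd_mult2[OF ea] dvd_mult[OF eb]] h(7)] .
    qed
    have dlj: "P dvd v * a - \<kappa> * (0 * b + 1 * t)"
    proof -
      have e: "v * a - \<kappa> * (0 * b + 1 * t) = v * (a - (1 - v)) - (\<kappa> * t - (v - v * v))" by (simp add: algebra_simps)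
      show ?thesis unfolding e using dvd_diff[OF dvd_mult[OF ea] h(7)] .
    qed
    have djl: "P dvd a * v - \<kappa> * (1 * t + 0 * b)" using dlj by (simp add: mult.commute)
    have "P dvd gg (pr v l a j) s u - \<kappa> * hh (unit j) (pr t l b j) s u" for s u
    proof -
      consider "s = l" "u = l" | "s = j" "u = j" | "s = l" "u = j" | "s = j" "u = l" | "s \<noteq> l \<and> s \<noteq> j \<or> u \<noteq> l \<and> u \<noteq> j"
        by blast
      thus ?thesis
      proof cases
        case 1 thus ?thesis using dl h(4) by (simp add: gg_def hh_def pr_def unit_def)
      next
        case 2 thus ?thesis using dj h(4) by (simp add: gg_def hh_def pr_def unit_def)
      next
        case 3 thus ?thesis using dlj h(4) by (simp add: gg_def hh_def pr_def unit_def)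
      next
        case 4 thus ?thesis using djl h(4) by (simp add: gg_def hh_def pr_def unit_def)
      next
        case 5 thus ?thesis using h(4) by (auto simp: gg_def hh_def pr_def unit_def)
      qed
    qed
    moreover have "unit j \<in> OI Sg" using h by (simp add: OI_def)
    moreover have "v \<in> Pr" using h by auto
    ultimately show "z \<in> C3" using h pr_ext[of l R j v a] pr_ext[of l Sg j t b] aP SgR
      unfolding z a_def[symmetric] b_def[symmetric] by (auto simp: C3_def)
  qed
  ultimately show ?thesis by blast
qed

lemma C3_eq: "C3 = Q0 \<union> Q1 \<union> Q1c \<union> Q2 \<union> Q3 \<union> Q4"
  using C3_sub C3_sup by blast

lemma finOIS: "finite (OI S)" if "finite S" for S using that by (simp add: OI_def)

lemma cQ0: "card Q0 = (card R + 1) * ((card Sg + 1) * p ^ card Sg)"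
proof -
  have eq: "Q0 = (\<lambda>(\<alpha>, e, t). (0::int, \<alpha>, e, t)) ` (OI R \<times> OI Sg \<times> ext Sg Pr)" by (auto simp: Q0_def)
  have inj: "inj_on (\<lambda>(\<alpha>, e, t). (0::int, \<alpha>, e, t)) (OI R \<times> OI Sg \<times> ext Sg Pr)" by (auto simp: inj_on_def)
  have "card Q0 = card (OI R \<times> OI Sg \<times> ext Sg Pr)" by (subst eq) (rule card_image[OF inj])
  thus ?thesis using finR finSg by (simp add: card_cartesian_product card_OI card_ext)
qed

lemma cQ1: "card Q1 = (p - 1) * (card (R - Sg) + 1)"
proof -
  have eq: "Q1 = (\<lambda>(\<kappa>, \<alpha>). (\<kappa>, \<alpha>, \<lambda>_::nat. 0::int, \<lambda>_::nat. 0::int)) ` ({1..<P} \<times> OI (R - Sg))" by (auto simp: Q1_def)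
  have inj: "inj_on (\<lambda>(\<kappa>, \<alpha>). (\<kappa>, \<alpha>, \<lambda>_::nat. 0::int, \<lambda>_::nat. 0::int)) ({1..<P} \<times> OI (R - Sg))" by (auto simp: inj_on_def)
  have "card Q1 = card ({1..<P} \<times> OI (R - Sg))" by (subst eq) (rule card_image[OF inj])
  thus ?thesis using finR by (simp add: card_cartesian_product card_OI card1 nP1)
qed

lemma cQ1c: "card Q1c = (p - 1) * card Sg * (p - 1)"
proof -
  define X where "X = {1..<P} \<times> Sg \<times> {1..<P}"
  define Y where "Y = {(x, t). x \<in> X \<and> t \<in> Pr \<and> P dvd fst x * t - (snd (snd x) - snd (snd x) * snd (snd x))}"
  have eq: "Q1c = (\<lambda>((\<kappa>, l, v), t). (\<kappa>, sc v l, \<lambda>_::nat. 0::int, sc t l)) ` Y"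
  proof
    show "Q1c \<subseteq> (\<lambda>((\<kappa>, l, v), t). (\<kappa>, sc v l, \<lambda>_::nat. 0::int, sc t l)) ` Y"
    proof
      fix z assume "z \<in> Q1c"
      then obtain \<kappa> l v t where z: "z = (\<kappa>, sc v l, \<lambda>_. 0, sc t l)" and h: "\<kappa> \<in> {1..<P}" "l \<in> Sg" "v \<in> {1..<P}" "t \<in> Pr"
        "P dvd \<kappa> * t - (v - v * v)" unfolding Q1c_def by blast
      show "z \<in> (\<lambda>((\<kappa>, l, v), t). (\<kappa>, sc v l, \<lambda>_::nat. 0::int, sc t l)) ` Y"
        by (rule image_eqI[where x = "((\<kappa>, l, v), t)"]) (use z h in \<open>auto simp: Y_def X_def\<close>)
    qed
    show "(\<lambda>((\<kappa>, l, v), t). (\<kappa>, sc v l, \<lambda>_::nat. 0::int, sc t l)) ` Y \<subseteq> Q1c"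
      unfolding Q1c_def Y_def X_def by fastforce
  qed
  have inj: "inj_on (\<lambda>((\<kappa>, l, v), t). (\<kappa>, sc v l, \<lambda>_::nat. 0::int, sc t l)) Y"
  proof (rule inj_onI, clarsimp)
    fix \<kappa> l v t l' v' t'
    assume h: "((\<kappa>, l, v), t) \<in> Y" "((\<kappa>, l', v'), t') \<in> Y" "sc v l = sc v' l'" "sc t l = sc t' l'"
    have v0: "v \<noteq> 0" using h(1) by (auto simp: Y_def X_def)
    have "sc v l l = sc v' l' l" using h(3) by simp
    hence ll: "l = l'" using v0 by (auto simp: sc_def split: if_splits)
    have "v = v'" using fun_cong[OF h(3), of l] ll by (simp add: sc_def)
    moreover have "t = t'" using fun_cong[OF h(4), of l] ll by (simp add: sc_def)
    ultimately show "l = l' \<and> v = v' \<and> t = t'" using ll by simp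
  qed
  have "card Q1c = card Y" by (subst eq) (rule card_image[OF inj])
  also have "\<dots> = card X" unfolding Y_def
  proof (rule count_param)
    show "finite X" using finSg by (simp add: X_def)
    fix x assume "x \<in> X" thus "\<not> P dvd fst x" using ndP[of "fst x"] by (auto simp: X_def)
  qed
  also have "\<dots> = (p - 1) * card Sg * (p - 1)" by (simp add: X_def card_cartesian_product card1 nP1)
  finally show ?thesis .
qed

lemma cQ2: "card Q2 = (p - 1) * card Sg * p"
proof -
  define X where "X = {1..<P} \<times> Sg \<times> Pr"
  define Y where "Y = {(x, t). x \<in> X \<and> t \<in> Pr \<and> P dvd fst x * t - (snd (snd x) * snd (snd x) - snd (snd x))}"
  have eq: "Q2 = (\<lambda>((\<kappa>, j, v), t). (\<kappa>, sc v j, unit j, sc t j)) ` Y"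
  proof
    show "Q2 \<subseteq> (\<lambda>((\<kappa>, j, v), t). (\<kappa>, sc v j, unit j, sc t j)) ` Y"
    proof
      fix z assume "z \<in> Q2"
      then obtain \<kappa> j v t where z: "z = (\<kappa>, sc v j, unit j, sc t j)" and h: "\<kappa> \<in> {1..<P}" "j \<in> Sg" "v \<in> Pr" "t \<in> Pr"
        "P dvd \<kappa> * t - (v * v - v)" unfolding Q2_def by blast
      show "z \<in> (\<lambda>((\<kappa>, j, v), t). (\<kappa>, sc v j, unit j, sc t j)) ` Y"
        by (rule image_eqI[where x = "((\<kappa>, j, v), t)"]) (use z h in \<open>auto simp: Y_def X_def\<close>)
    qed
    show "(\<lambda>((\<kappa>, j, v), t). (\<kappa>, sc v j, unit j, sc t j)) ` Y \<subseteq> Q2"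
      unfolding Q2_def Y_def X_def by fastforce
  qed
  have inj: "inj_on (\<lambda>((\<kappa>, j, v), t). (\<kappa>, sc v j, unit j, sc t j)) Y"
  proof (rule inj_onI, clarsimp)
    fix \<kappa> j v t j' v' t'
    assume h: "sc v j = sc v' j'" "unit j = unit j'" "sc t j = sc t' j'"
    have jj: "j = j'" using h(2) unit_inj by blast
    have "v = v'" using fun_cong[OF h(1), of j] jj by (simp add: sc_def)
    moreover have "t = t'" using fun_cong[OF h(3), of j] jj by (simp add: sc_def)
    ultimately show "j = j' \<and> v = v' \<and> t = t'" using jj by simp
  qed
  have "card Q2 = card Y" by (subst eq) (rule card_image[OF inj])
  also have "\<dots> = card X" unfolding Y_def
  proof (rule count_param)
    show "finite X" using finSg by (simp add: X_def)
    fix x assume "x \<in> X" thus "\<not> P dvd fst x" using ndP[of "fst x"] by (auto simp: X_def)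
  qed
  also have "\<dots> = (p - 1) * card Sg * p" by (simp add: X_def card_cartesian_product card1 nP1)
  finally show ?thesis .
qed

lemma cQ3: "card Q3 = (p - 1) * card Sg * card (R - Sg)"
proof -
  have eq: "Q3 = (\<lambda>(\<kappa>, j, l). (\<kappa>, unit l, unit j, \<lambda>_::nat. 0::int)) ` ({1..<P} \<times> Sg \<times> (R - Sg))"
  proof
    show "Q3 \<subseteq> (\<lambda>(\<kappa>, j, l). (\<kappa>, unit l, unit j, \<lambda>_::nat. 0::int)) ` ({1..<P} \<times> Sg \<times> (R - Sg))"
    proof
      fix z assume "z \<in> Q3"
      then obtain \<kappa> j l where z: "z = (\<kappa>, unit l, unit j, \<lambda>_. 0)" and h: "\<kappa> \<in> {1..<P}" "j \<in> Sg" "l \<in> R - Sg"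
        unfolding Q3_def by blast
      show "z \<in> (\<lambda>(\<kappa>, j, l). (\<kappa>, unit l, unit j, \<lambda>_::nat. 0::int)) ` ({1..<P} \<times> Sg \<times> (R - Sg))"
        by (rule image_eqI[where x = "(\<kappa>, j, l)"]) (use z h in auto)
    qed
    show "(\<lambda>(\<kappa>, j, l). (\<kappa>, unit l, unit j, \<lambda>_::nat. 0::int)) ` ({1..<P} \<times> Sg \<times> (R - Sg)) \<subseteq> Q3"
      unfolding Q3_def by fastforce
  qed
  have inj: "inj_on (\<lambda>(\<kappa>, j, l). (\<kappa>, unit l, unit j, \<lambda>_::nat. 0::int)) ({1..<P} \<times> Sg \<times> (R - Sg))"
    by (auto simp: inj_on_def unit_inj)
  have "card Q3 = card ({1..<P} \<times> Sg \<times> (R - Sg))" by (subst eq) (rule card_image[OF inj])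
  thus ?thesis by (simp add: card_cartesian_product card1 nP1)
qed

definition "SS = {(j, l). j \<in> Sg \<and> l \<in> Sg \<and> l \<noteq> j}"

lemma card_SS: "card SS = card Sg * (card Sg - 1)"
proof -
  have "SS = Sigma Sg (\<lambda>j. Sg - {j})" by (auto simp: SS_def)
  hence "card SS = (\<Sum>j\<in>Sg. card (Sg - {j}))" using finSg by (simp add: card_SigmaI)
  also have "\<dots> = (\<Sum>j\<in>Sg. card Sg - 1)" using finSg by (intro sum.cong) (auto simp: card_Diff_singleton)
  finally show ?thesis by (simp add: mult.commute)
qed

lemma finSS: "finite SS"
proof -
  have "SS \<subseteq> Sg \<times> Sg" by (auto simp: SS_def)
  thus ?thesis using finSg finite_subset by blast
qed

lemma cQ4: "card Q4 = (p - 1) * (card Sg * (card Sg - 1)) * (p - 1)"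
proof -
  define X where "X = {1..<P} \<times> SS \<times> {1..<P}"
  define Y where "Y = {(x, t). x \<in> X \<and> t \<in> Pr \<and> P dvd fst x * t - (snd (snd x) - snd (snd x) * snd (snd x))}"
  define f where "f = (\<lambda>((\<kappa>::int, (j::nat, l::nat), v::int), t::int). (\<kappa>, pr v l ((1 - v) mod P) j, unit j, pr t l ((- t) mod P) j))"
  have eq: "Q4 = f ` Y"
  proof
    show "Q4 \<subseteq> f ` Y"
    proof
      fix z assume "z \<in> Q4"
      then obtain \<kappa> j l v t where z: "z = (\<kappa>, pr v l ((1 - v) mod P) j, unit j, pr t l ((- t) mod P) j)" and
        h: "\<kappa> \<in> {1..<P}" "j \<in> Sg" "l \<in> Sg" "l \<noteq> j" "v \<in> {1..<P}" "t \<in> Pr" "P dvd \<kappa> * t - (v - v * v)"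
        unfolding Q4_def by blast
      show "z \<in> f ` Y"
        by (rule image_eqI[where x = "((\<kappa>, (j, l), v), t)"]) (use z h in \<open>auto simp: Y_def X_def SS_def f_def\<close>)
    qed
    show "f ` Y \<subseteq> Q4"
      unfolding Q4_def Y_def X_def SS_def f_def by fastforce
  qed
  have inj: "inj_on f Y"
  proof (rule inj_onI)
    fix x y assume xy: "x \<in> Y" "y \<in> Y" "f x = f y"
    obtain \<kappa> j l v t where x: "x = ((\<kappa>, (j, l), v), t)" by (metis prod.collapse)
    obtain \<kappa>' j' l' v' t' where y: "y = ((\<kappa>', (j', l'), v'), t')" by (metis prod.collapse)
    have h: "\<kappa> = \<kappa>'" "pr v l ((1 - v) mod P) j = pr v' l' ((1 - v') mod P) j'" "unit j = unit j'"
      "pr t l ((- t) mod P) j = pr t' l' ((- t') mod P) j'" using xy(3) by (auto simp: x y f_def)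
    have r: "l \<noteq> j" "l' \<noteq> j'" "v \<noteq> 0" "v' \<noteq> 0" using xy(1,2) by (auto simp: x y Y_def X_def SS_def)
    have jj: "j = j'" using h(3) unit_inj by blast
    have "pr v' l' ((1 - v') mod P) j' l \<noteq> 0" using fun_cong[OF h(2), of l] r by (simp add: pr_def)
    hence ll: "l = l'" using r jj by (auto simp: pr_def split: if_splits)
    have "v = v'" using fun_cong[OF h(2), of l] ll r by (simp add: pr_def)
    moreover have "t = t'" using fun_cong[OF h(4), of l] ll r by (simp add: pr_def)
    ultimately show "x = y" using h(1) jj ll by (simp add: x y)
  qed
  have "card Q4 = card Y" by (subst eq) (rule card_image[OF inj])
  also have "\<dots> = card X" unfolding Y_def
  proof (rule count_param)
    show "finite X" using finSS by (simp add: X_def)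
    fix x assume "x \<in> X" thus "\<not> P dvd fst x" using ndP[of "fst x"] by (auto simp: X_def)
  qed
  also have "\<dots> = (p - 1) * (card Sg * (card Sg - 1)) * (p - 1)" by (simp add: X_def card_cartesian_product card1 card_SS nP1)
  finally show ?thesis .
qed

lemma finC3: "finite C3"
proof -
  have "C3 \<subseteq> Pr \<times> ext R Pr \<times> OI Sg \<times> ext Sg Pr" by (auto simp: C3_def)
  moreover have "finite (Pr \<times> ext R Pr \<times> OI Sg \<times> ext Sg Pr)" using finR finSg finite_ext finOIS by auto
  ultimately show ?thesis using finite_subset by blast
qed

lemma qshapes:
  "z \<in> Q0 \<Longrightarrow> fst z = 0"
  "z \<in> Q1 \<Longrightarrow> fst z \<ge> 1 \<and> fst (snd (snd z)) = (\<lambda>_. 0) \<and> (\<forall>s\<in>Sg. fst (snd z) s = 0)"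
  "z \<in> Q1c \<Longrightarrow> fst z \<ge> 1 \<and> fst (snd (snd z)) = (\<lambda>_. 0) \<and> (\<exists>l\<in>Sg. fst (snd z) l \<noteq> 0)"
  "z \<in> Q2 \<Longrightarrow> fst z \<ge> 1 \<and> (\<exists>j. fst (snd (snd z)) = unit j \<and> (\<forall>s. s \<noteq> j \<longrightarrow> fst (snd z) s = 0))"
  "z \<in> Q3 \<Longrightarrow> fst z \<ge> 1 \<and> (\<exists>j l. fst (snd (snd z)) = unit j \<and> l \<notin> Sg \<and> l \<noteq> j \<and> fst (snd z) l \<noteq> 0
      \<and> (\<forall>s. s \<noteq> l \<longrightarrow> fst (snd z) s = 0))"
  "z \<in> Q4 \<Longrightarrow> fst z \<ge> 1 \<and> (\<exists>j l. fst (snd (snd z)) = unit j \<and> l \<in> Sg \<and> l \<noteq> j \<and> fst (snd z) l \<noteq> 0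
      \<and> (\<forall>s. s \<noteq> l \<longrightarrow> s \<noteq> j \<longrightarrow> fst (snd z) s = 0))"
proof -
  show "z \<in> Q0 \<Longrightarrow> fst z = 0" by (auto simp: Q0_def)
  show "z \<in> Q1 \<Longrightarrow> fst z \<ge> 1 \<and> fst (snd (snd z)) = (\<lambda>_. 0) \<and> (\<forall>s\<in>Sg. fst (snd z) s = 0)"
    by (auto simp: Q1_def OI_def unit_def)
  show "z \<in> Q1c \<Longrightarrow> fst z \<ge> 1 \<and> fst (snd (snd z)) = (\<lambda>_. 0) \<and> (\<exists>l\<in>Sg. fst (snd z) l \<noteq> 0)"
    by (auto simp: Q1c_def sc_def)
  show "z \<in> Q2 \<Longrightarrow> fst z \<ge> 1 \<and> (\<exists>j. fst (snd (snd z)) = unit j \<and> (\<forall>s. s \<noteq> j \<longrightarrow> fst (snd z) s = 0))"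
    by (auto simp: Q2_def sc_def)
  show "z \<in> Q3 \<Longrightarrow> fst z \<ge> 1 \<and> (\<exists>j l. fst (snd (snd z)) = unit j \<and> l \<notin> Sg \<and> l \<noteq> j \<and> fst (snd z) l \<noteq> 0
      \<and> (\<forall>s. s \<noteq> l \<longrightarrow> fst (snd z) s = 0))"
    by (auto simp: Q3_def unit_def)
  show "z \<in> Q4 \<Longrightarrow> fst z \<ge> 1 \<and> (\<exists>j l. fst (snd (snd z)) = unit j \<and> l \<in> Sg \<and> l \<noteq> j \<and> fst (snd z) l \<noteq> 0
      \<and> (\<forall>s. s \<noteq> l \<longrightarrow> s \<noteq> j \<longrightarrow> fst (snd z) s = 0))"
  proof -
    assume "z \<in> Q4"
    then obtain \<kappa> j l v t where z: "z = (\<kappa>, pr v l ((1 - v) mod P) j, unit j, pr t l ((- t) mod P) j)" and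
      h: "\<kappa> \<in> {1..<P}" "j \<in> Sg" "l \<in> Sg" "l \<noteq> j" "v \<in> {1..<P}"
      unfolding Q4_def by blast
    have "fst (snd (snd z)) = unit j \<and> l \<in> Sg \<and> l \<noteq> j \<and> fst (snd z) l \<noteq> 0
      \<and> (\<forall>s. s \<noteq> l \<longrightarrow> s \<noteq> j \<longrightarrow> fst (snd z) s = 0)" using z h by (auto simp: pr_def)
    moreover have "fst z \<ge> 1" using z h by simp
    ultimately show ?thesis by blast
  qed
qed

lemma qdisjs:
  "Q0 \<inter> Q1 = {}" "Q0 \<inter> Q1c = {}" "Q0 \<inter> Q2 = {}" "Q0 \<inter> Q3 = {}" "Q0 \<inter> Q4 = {}"
  "Q1 \<inter> Q1c = {}" "Q1 \<inter> Q2 = {}" "Q1 \<inter> Q3 = {}" "Q1 \<inter> Q4 = {}"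
  "Q1c \<inter> Q2 = {}" "Q1c \<inter> Q3 = {}" "Q1c \<inter> Q4 = {}"
  "Q2 \<inter> Q3 = {}" "Q2 \<inter> Q4 = {}" "Q3 \<inter> Q4 = {}"
proof -
  note sh = qshapes
  note u0 = unit_ne0
  show "Q0 \<inter> Q1 = {}" using sh(1,2) by fastforce
  show "Q0 \<inter> Q1c = {}" using sh(1,3) by fastforce
  show "Q0 \<inter> Q2 = {}" using sh(1,4) by fastforce
  show "Q0 \<inter> Q3 = {}" using sh(1,5) by fastforce
  show "Q0 \<inter> Q4 = {}" using sh(1,6) by fastforce
  show "Q1 \<inter> Q1c = {}" using sh(2,3) by (metis disjoint_iff)
  show "Q1 \<inter> Q2 = {}" using sh(2,4) u0 by (metis disjoint_iff)
  show "Q1 \<inter> Q3 = {}" using sh(2,5) u0 by (metis disjoint_iff)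
  show "Q1 \<inter> Q4 = {}" using sh(2,6) u0 by (metis disjoint_iff)
  show "Q1c \<inter> Q2 = {}" using sh(3,4) u0 by (metis disjoint_iff)
  show "Q1c \<inter> Q3 = {}" using sh(3,5) u0 by (metis disjoint_iff)
  show "Q1c \<inter> Q4 = {}" using sh(3,6) u0 by (metis disjoint_iff)
  show "Q2 \<inter> Q3 = {}"
  proof (rule equals0I)
    fix z assume "z \<in> Q2 \<inter> Q3" hence "z \<in> Q2" "z \<in> Q3" by auto
    then obtain j j' l where "fst (snd (snd z)) = unit j" "\<forall>s. s \<noteq> j \<longrightarrow> fst (snd z) s = 0"
      "fst (snd (snd z)) = unit j'" "l \<noteq> j'" "fst (snd z) l \<noteq> 0" using sh(4,5) by meson
    thus False using unit_inj by metis
  qed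
  show "Q2 \<inter> Q4 = {}"
  proof (rule equals0I)
    fix z assume "z \<in> Q2 \<inter> Q4" hence "z \<in> Q2" "z \<in> Q4" by auto
    then obtain j j' l where "fst (snd (snd z)) = unit j" "\<forall>s. s \<noteq> j \<longrightarrow> fst (snd z) s = 0"
      "fst (snd (snd z)) = unit j'" "l \<noteq> j'" "fst (snd z) l \<noteq> 0" using sh(4,6) by meson
    thus False using unit_inj by metis
  qed
  show "Q3 \<inter> Q4 = {}"
  proof (rule equals0I)
    fix z assume "z \<in> Q3 \<inter> Q4" hence "z \<in> Q3" "z \<in> Q4" by auto
    then obtain j l j' l' where a: "fst (snd (snd z)) = unit j" "l \<notin> Sg" "l \<noteq> j" "fst (snd z) l \<noteq> 0"
      "fst (snd (snd z)) = unit j'" "l' \<in> Sg" "\<forall>s. s \<noteq> l' \<longrightarrow> s \<noteq> j' \<longrightarrow> fst (snd z) s = 0" using sh(5,6) by meson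
    have "j = j'" using a unit_inj by metis
    moreover have "l \<noteq> l'" using a by auto
    ultimately show False using a by metis
  qed
qed

lemma card_C3: "card C3 = card Q0 + card Q1 + card Q1c + card Q2 + card Q3 + card Q4"
proof -
  have f: "finite Q0" "finite Q1" "finite Q1c" "finite Q2" "finite Q3" "finite Q4"
    using finC3 C3_eq by (auto intro: finite_subset)
  have "card C3 = card (Q0 \<union> Q1 \<union> Q1c \<union> Q2 \<union> Q3 \<union> Q4)" using C3_eq by simp
  also have "\<dots> = card (Q0 \<union> Q1 \<union> Q1c \<union> Q2 \<union> Q3) + card Q4"
    using f qdisjs by (intro card_Un_disjoint) auto
  also have "card (Q0 \<union> Q1 \<union> Q1c \<union> Q2 \<union> Q3) = card (Q0 \<union> Q1 \<union> Q1c \<union> Q2) + card Q3"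
    using f qdisjs by (intro card_Un_disjoint) auto
  also have "card (Q0 \<union> Q1 \<union> Q1c \<union> Q2) = card (Q0 \<union> Q1 \<union> Q1c) + card Q2"
    using f qdisjs by (intro card_Un_disjoint) auto
  also have "card (Q0 \<union> Q1 \<union> Q1c) = card (Q0 \<union> Q1) + card Q1c"
    using f qdisjs by (intro card_Un_disjoint) auto
  also have "card (Q0 \<union> Q1) = card Q0 + card Q1"
    using f qdisjs by (intro card_Un_disjoint) auto
  finally show ?thesis .
qed

end

context L begin

lemma SgR: "Sg \<subseteq> R" using kbounds by (auto simp: Sg_def R_def)

lemma CCi: "CC p R Sg"
  using pp finR SgR by (unfold_locales) auto

lemma card_Sg: "card Sg = n - k - 2" by (simp add: Sg_def)

lemma card_RSg: "card (R - Sg) = k - 1"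
proof -
  have "R - Sg = {1..<k}" using kbounds by (auto simp: R_def Sg_def)
  thus ?thesis by simp
qed

lemma gf_gg: "gf = gg" by (simp add: gf_def gg_def fun_eq_iff)

lemma Core_C2: assumes "\<beta> = 2" shows "Core = CC.C2 p R Sg"
proof -
  have q1: "q = 1" using assms by simp
  have "Db = ext Sg {0..<P}" unfolding Db_def using assms by simp
  thus ?thesis unfolding Core_def CC.C2_def[OF CCi] cc_def q1 gf_gg by auto
qed

lemma p2: "p \<ge> 2" using pp prime_ge_2_nat by blast

lemma int_pp: "int ((p - 2) * (p - 3)) = (int p - 2) * (int p - 3)"
proof (cases "p = 2")
  case True thus ?thesis by simp
next
  case False hence "p \<ge> 3" using p2 by simp
  thus ?thesis by (simp add: of_nat_diff)
qed

lemma main2: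
  assumes b2: "\<beta> = 2"
  shows "int (g al p) =
             (int n - 1) * int p ^ (2*n - k - 5)
             + (int n - int k - 1) * (int n - 2) * int p ^ (n - 3) * (int p - 1)
             - (int n - int k - 1) * int p ^ (n - 3)
             + ((int n - int k - 2) + int ((n - k - 2) choose 2))
                 * int p ^ (n - 3) * (int p - 2) * (int p - 3)"
proof -
  interpret X: CC p R Sg by (rule CCi)
  define N where "N = n - k - 2"
  have NS: "card Sg = N" by (simp add: N_def card_Sg)
  have RS: "card R = n - 3" by (rule card_R)
  have gC: "g al p = card (X.C2) * p ^ (n - 3)" using g_PA card_PA_Core Core_C2[OF b2] by simp
  have cC: "card X.C2 = (n - 2) * p ^ N + p ^ N + ((p - 1) * (n - 2) - 1) + N * ((p - 1) * (n - 2) - 1)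
      + N * ((p - 2) * (p - 3)) + (N choose 2) * ((p - 2) * (p - 3))"
  proof -
    have r1: "card R + 1 = n - 2" using RS n3 by simp
    show ?thesis by (simp only: X.card_C2 X.cP0 X.cP1 X.cP2 X.cP3 X.cP4 X.cP5 NS r1)
  qed
  have ge1: "(p - 1) * (n - 2) \<ge> 1" using p2 n3 by (simp add: Suc_le_eq)
  have i1: "int ((p - 1) * (n - 2) - 1) = (int p - 1) * (int n - 2) - 1"
    using ge1 p2 n3 by (simp add: of_nat_diff)
  have iN: "int N = int n - int k - 2" using kn n3 by (simp add: N_def of_nat_diff)
  have in2: "int (n - 2) = int n - 2" using n3 by simp
  have pw: "int p ^ (2 * n - k - 5) = int p ^ N * int p ^ (n - 3)"
  proof -
    have "2 * n - k - 5 = N + (n - 3)" using kn n3 by (simp add: N_def)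
    thus ?thesis by (simp add: power_add)
  qed
  have "int (g al p) = int (card X.C2) * int p ^ (n - 3)" using gC by simp
  also have "int (card X.C2) = (int n - 2) * int p ^ N + int p ^ N + ((int p - 1) * (int n - 2) - 1)
      + (int n - int k - 2) * ((int p - 1) * (int n - 2) - 1)
      + (int n - int k - 2) * ((int p - 2) * (int p - 3)) + int (N choose 2) * ((int p - 2) * (int p - 3))"
    unfolding cC using i1 iN in2 int_pp by simp
  finally show ?thesis unfolding pw N_def[symmetric] by (simp add: algebra_simps)
qed

lemma qgt1: "\<beta> > 2 \<Longrightarrow> q > 1" using P_pos by simp
lemma Pdq: "\<beta> > 2 \<Longrightarrow> P dvd q" by (simp add: dvd_power)
lemma qP: "q * P = P ^ (\<beta> - 1)"
proof -
  have "\<beta> - 1 = Suc (\<beta> - 2)" using b1 by simp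
  thus ?thesis by (simp add: mult.commute)
qed

lemma pp_dvd:
  assumes b: "\<beta> > 2" and d: "q dvd x * (x - 1)"
  shows "x mod q = 0 \<or> x mod q = 1"
proof (cases "P dvd x")
  case True
  have "\<not> P dvd x - 1"
  proof
    assume "P dvd x - 1" hence "P dvd x - (x - 1)" using dvd_diff[OF True] by blast
    thus False using P_pos by simp
  qed
  moreover have "q dvd (x - 1) * x" using d by (simp add: mult.commute)
  ultimately have "q dvd x" using prime_power_dvd_multD[of P "\<beta> - 2" "x - 1" x] Pprime b by auto
  thus ?thesis by simp
next
  case False
  hence "q dvd x - 1" using prime_power_dvd_multD[of P "\<beta> - 2" x "x - 1"] Pprime b d by auto
  hence "x mod q = 1 mod q" by (simp add: mod_eq_dvd_iff)
  thus ?thesis using qgt1[OF b] by simp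
qed

lemma OI_props:
  assumes "e \<in> OI Sg"
  shows "\<And>i. e i * e i = e i" "\<And>i j. i \<noteq> j \<Longrightarrow> e i * e j = 0" "\<And>i. e i = 0 \<or> e i = 1" "\<And>s. s \<notin> Sg \<Longrightarrow> e s = 0"
  using assms by (auto simp: OI_def unit_def)

lemma gg_rep:
  assumes "e \<in> OI Sg"
  shows "gg (\<lambda>s. e s + q * t s) i j = q * (hh e t i j + q * (t i * t j))"
proof (cases "i = j")
  case True
  have "gg (\<lambda>s. e s + q * t s) i j = (e i * e i - e i) + q * ((2 * e i - 1) * t i + q * (t i * t i))"
    using True by (simp add: gg_def algebra_simps)
  thus ?thesis using True OI_props(1)[OF assms] by (simp add: hh_def)
next
  case False
  have "gg (\<lambda>s. e s + q * t s) i j = e i * e j + q * (e i * t j + e j * t i + q * (t i * t j))"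
    using False by (simp add: gg_def algebra_simps)
  thus ?thesis using False OI_props(2)[OF assms False] by (simp add: hh_def)
qed

lemma Core_C3: assumes b: "\<beta> > 2" shows "card Core = card (CC.C3 p R Sg)"
proof -
  interpret X: CC p R Sg by (rule CCi)
  have q1: "q > 1" using qgt1[OF b] .
  have Pq: "P dvd q" using Pdq[OF b] .
  have qn0: "q \<noteq> 0" using q1 by linarith
  define \<Phi> where "\<Phi> = (\<lambda>(\<kappa>::int, \<alpha>::nat \<Rightarrow> int, e::nat \<Rightarrow> int, t::nat \<Rightarrow> int). (\<kappa>, \<alpha>, \<lambda>s. e s + q * t s))"
  have "bij_betw \<Phi> X.C3 Core"
  proof (rule bij_betw_imageI)
    show "inj_on \<Phi> X.C3"
    proof (rule inj_onI)
      fix x y assume x: "x \<in> X.C3" and y: "y \<in> X.C3" and e: "\<Phi> x = \<Phi> y"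
      obtain \<kappa> \<alpha> e1 t1 where xd: "x = (\<kappa>, \<alpha>, e1, t1)" by (metis prod.collapse)
      obtain \<kappa>' \<alpha>' e2 t2 where yd: "y = (\<kappa>', \<alpha>', e2, t2)" by (metis prod.collapse)
      have h1: "e1 \<in> OI Sg" "e2 \<in> OI Sg" using x y by (auto simp: xd yd X.C3_def)
      have eq: "\<kappa> = \<kappa>'" "\<alpha> = \<alpha>'" "\<And>s. e1 s + q * t1 s = e2 s + q * t2 s"
        using e by (auto simp: xd yd \<Phi>_def fun_eq_iff)
      have em: "(e1 s + q * t1 s) mod q = e1 s" "(e2 s + q * t2 s) mod q = e2 s" for s
        using OI_props(3)[OF h1(1), of s] OI_props(3)[OF h1(2), of s] q1 by auto
      have ee: "e1 = e2" using eq(3) em by (metis ext)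
      have "t1 = t2"
      proof
        fix s have "q * t1 s = q * t2 s" using eq(3)[of s] ee by simp
        moreover have qn: "q \<noteq> 0" using q1 by linarith
        ultimately show "t1 s = t2 s" by (metis mult_cancel_left)
      qed
      thus "x = y" using eq ee by (simp add: xd yd)
    qed
    show "\<Phi> ` X.C3 = Core"
    proof
      show "\<Phi> ` X.C3 \<subseteq> Core"
      proof
        fix z assume "z \<in> \<Phi> ` X.C3"
        then obtain \<kappa> \<alpha> e t where z: "z = (\<kappa>, \<alpha>, \<lambda>s. e s + q * t s)" and k: "\<kappa> \<in> {0..<P}" and a: "\<alpha> \<in> ext R {0..<P}"
          and eO: "e \<in> OI Sg" and te: "t \<in> ext Sg {0..<P}" and H: "\<forall>i\<in>R. \<forall>j\<in>R. P dvd gg \<alpha> i j - \<kappa> * hh e t i j"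
          by (auto simp: \<Phi>_def X.C3_def)
        have bD: "(\<lambda>s. e s + q * t s) \<in> Db"
        proof -
          have "0 \<le> e s + q * t s \<and> e s + q * t s < P ^ (\<beta> - 1)" if "s \<in> Sg" for s
          proof -
            have h: "e s = 0 \<or> e s = 1" "0 \<le> t s" "t s \<le> P - 1" using OI_props(3)[OF eO] te that by (auto simp: ext_def)
            have "q * t s \<le> q * (P - 1)" using h q1 by (intro mult_left_mono) auto
            hence "e s + q * t s < q * P" using h q1 by (auto simp: algebra_simps)
            thus ?thesis using h q1 qP by auto
          qed
          moreover have "e s + q * t s = 0" if "s \<notin> Sg" for s using OI_props(4)[OF eO that] te that by (auto simp: ext_def)
          ultimately show ?thesis by (auto simp: Db_def ext_def)
        qed
        have "cc \<kappa> \<alpha> (\<lambda>s. e s + q * t s)"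
          unfolding cc_def gf_gg gg_rep[OF eO]
        proof (intro ballI conjI)
          fix i j assume ij: "i \<in> R" "j \<in> R"
          show "q dvd q * (hh e t i j + q * (t i * t j))" by simp
          have "q * (hh e t i j + q * (t i * t j)) div q = hh e t i j + q * (t i * t j)" by (rule nonzero_mult_div_cancel_left[OF qn0])
          moreover have "P dvd (gg \<alpha> i j - \<kappa> * hh e t i j) - \<kappa> * q * (t i * t j)"
          proof -
            have Hij: "P dvd gg \<alpha> i j - \<kappa> * hh e t i j" using H ij by blast
            have "P dvd \<kappa> * q * (t i * t j)" using Pq by (simp add: dvd_mult)
            thus ?thesis using dvd_diff[OF Hij] by blast
          qed
          ultimately show "P dvd gg \<alpha> i j - \<kappa> * (q * (hh e t i j + q * (t i * t j)) div q)"
            by (simp add: algebra_simps)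
        qed
        thus "z \<in> Core" using k a bD by (simp add: z Core_def)
      qed
      show "Core \<subseteq> \<Phi> ` X.C3"
      proof
        fix z assume "z \<in> Core"
        then obtain \<kappa> \<alpha> b where z: "z = (\<kappa>, \<alpha>, b)" and k: "\<kappa> \<in> {0..<P}" and a: "\<alpha> \<in> ext R {0..<P}"
          and bD: "b \<in> Db" and c: "cc \<kappa> \<alpha> b" by (auto simp: Core_def)
        define e where "e s = b s mod q" for s
        define t where "t s = b s div q" for s
        have bet: "b = (\<lambda>s. e s + q * t s)" by (auto simp: e_def t_def fun_eq_iff)
        have bS: "b s = 0" if "s \<notin> Sg" for s using bD that by (auto simp: Db_def ext_def)
        have e01: "e s = 0 \<or> e s = 1" for s
        proof (cases "s \<in> Sg")
          case True
          hence "s \<in> R" using SgR by blast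
          hence "q dvd gf b s s" using c by (auto simp: cc_def)
          hence "q dvd b s * (b s - 1)" by (simp add: gf_def algebra_simps)
          thus ?thesis using pp_dvd[OF b] by (simp add: e_def)
        qed (simp add: e_def bS)
        have eS: "e s = 0" if "s \<notin> Sg" for s using bS[OF that] by (simp add: e_def)
        have e11: "\<not> (e i = 1 \<and> e j = 1)" if "i \<noteq> j" for i j
        proof
          assume h: "e i = 1 \<and> e j = 1"
          hence "i \<in> Sg" "j \<in> Sg" using eS zero_neq_one by metis+
          hence "i \<in> R" "j \<in> R" using SgR by auto
          hence "q dvd gf b i j" using c by (auto simp: cc_def)
          hence "q dvd b i * b j" using that by (simp add: gf_def)
          moreover have "(b i * b j) mod q = (e i * e j) mod q" unfolding e_def by (simp add: mod_mult_eq)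
          ultimately have "q dvd 1" using h q1 by (simp add: dvd_eq_mod_eq_0)
          thus False using q1 by simp
        qed
        have eO: "e \<in> OI Sg"
        proof (cases "\<forall>s. e s = 0")
          case True thus ?thesis by (auto simp: OI_def fun_eq_iff)
        next
          case False
          then obtain l where l: "e l \<noteq> 0" by blast
          hence l1: "e l = 1" "l \<in> Sg" using e01 eS by blast+
          have "e = unit l"
          proof
            fix s show "e s = unit l s"
              using l1 e01[of s] e11[of s l] by (cases "s = l") (auto simp: unit_def)
          qed
          thus ?thesis using l1 by (simp add: OI_def)
        qed
        have tE: "t \<in> ext Sg {0..<P}"
        proof -
          have "0 \<le> t s \<and> t s < P" if "s \<in> Sg" for s
          proof -
            have "0 \<le> b s" "b s < P ^ (\<beta> - 1)" using bD that by (auto simp: Db_def ext_def)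
            hence "b s < P * q" using qP by (simp add: mult.commute)
            have qp: "0 < q" using q1 by linarith
            have "0 \<le> b s div q" using \<open>0 \<le> b s\<close> qp by (simp add: pos_imp_zdiv_nonneg_iff)
            moreover have "b s div q < P" using zdiv_lt[OF qp \<open>b s < P * q\<close>] .
            ultimately show ?thesis by (simp add: t_def)
          qed
          moreover have "t s = 0" if "s \<notin> Sg" for s using bS[OF that] by (simp add: t_def)
          ultimately show ?thesis by (auto simp: ext_def)
        qed
        have H: "\<forall>i\<in>R. \<forall>j\<in>R. P dvd gg \<alpha> i j - \<kappa> * hh e t i j"
        proof (intro ballI)
          fix i j assume ij: "i \<in> R" "j \<in> R"
          have "P dvd gf \<alpha> i j - \<kappa> * (gf b i j div q)" using c ij by (auto simp: cc_def)
          moreover have "gf b i j div q = hh e t i j + q * (t i * t j)"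
            unfolding gf_gg bet gg_rep[OF eO] by (rule nonzero_mult_div_cancel_left[OF qn0])
          ultimately have "P dvd (gg \<alpha> i j - \<kappa> * (hh e t i j + q * (t i * t j))) + \<kappa> * q * (t i * t j)"
            using Pq unfolding gf_gg by (intro dvd_add) auto
          thus "P dvd gg \<alpha> i j - \<kappa> * hh e t i j" by (simp add: algebra_simps)
        qed
        have "(\<kappa>, \<alpha>, e, t) \<in> X.C3" using k a eO tE H by (simp add: X.C3_def)
        moreover have "\<Phi> (\<kappa>, \<alpha>, e, t) = z" using bet by (simp add: \<Phi>_def z)
        ultimately show "z \<in> \<Phi> ` X.C3" by (metis image_eqI)
      qed
    qed
  qed
  thus ?thesis by (simp add: bij_betw_same_card)
qed

lemma int_NN: "int (N * (N - 1)) = int N * (int N - 1)"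
  by (cases N) (auto simp: algebra_simps)

lemma main3:
  assumes b3: "\<beta> > 2"
  shows "int (g al p) =
             (int n - int k - 1) * (int n - 2) * int p ^ (2*n - k - 5)
             + ((int n - int k - 1) * (int k - 1) + 1 + (int n - int k - 2) * (int n - int k - 3))
                 * int p ^ (n - 3) * (int p - 1)
             + (int n - int k - 2) * int p ^ (n - 3) * (int p - 1)^2
             + (int n - int k - 2) * int p ^ (n - 2) * (int p - 1)
             + (int n - int k - 2) * (int n - int k - 3) * int p ^ (n - 3) * (int p - 1) * (int p - 2)"
proof -
  interpret X: CC p R Sg by (rule CCi)
  define N where "N = n - k - 2"
  define K where "K = k - 1"
  have NS: "card Sg = N" by (simp add: N_def card_Sg)
  have KS: "card (R - Sg) = K" by (simp add: K_def card_RSg)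
  have RS: "card R = n - 3" by (rule card_R)
  have r1: "card R + 1 = n - 2" using RS n3 by simp
  have gC: "g al p = card (X.C3) * p ^ (n - 3)" using g_PA card_PA_Core Core_C3[OF b3] by simp
  define M where "M = N * (N - 1)"
  have iM: "int M = int N * (int N - 1)" unfolding M_def by (rule int_NN)
  have cC: "card X.C3 = (n - 2) * ((N + 1) * p ^ N) + (p - 1) * (K + 1) + (p - 1) * N * (p - 1)
      + (p - 1) * N * p + (p - 1) * N * K + (p - 1) * M * (p - 1)"
    unfolding M_def by (simp only: X.card_C3 X.cQ0 X.cQ1 X.cQ1c X.cQ2 X.cQ3 X.cQ4 NS KS r1)
  have iN: "int N = int n - int k - 2" using kn n3 by (simp add: N_def of_nat_diff)
  have iK: "int K = int k - 1" using k1 by (simp add: K_def of_nat_diff)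
  have in2: "int (n - 2) = int n - 2" using n3 by simp
  have ip1: "int (p - 1) = int p - 1" using p2 by simp
  have pw: "int p ^ (2 * n - k - 5) = int p ^ N * int p ^ (n - 3)"
  proof -
    have "2 * n - k - 5 = N + (n - 3)" using kn n3 by (simp add: N_def)
    thus ?thesis by (simp add: power_add)
  qed
  have pw2: "int p ^ (n - 2) = int p * int p ^ (n - 3)"
  proof -
    have "n - 2 = Suc (n - 3)" using n3 by simp
    thus ?thesis by simp
  qed
  have "int (g al p) = int (card X.C3) * int p ^ (n - 3)" using gC by simp
  also have "int (card X.C3) = (int n - 2) * ((int N + 1) * int p ^ N) + (int p - 1) * (int K + 1)
      + (int p - 1) * int N * (int p - 1) + (int p - 1) * int N * int p + (int p - 1) * int N * int K
      + (int p - 1) * (int N * (int N - 1)) * (int p - 1)"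
    unfolding cC of_nat_add of_nat_mult of_nat_power in2 ip1 iM of_nat_1 by (simp add: algebra_simps)
  finally have "int (g al p) = ((int n - 2) * ((int N + 1) * int p ^ N) + (int p - 1) * (int K + 1)
      + (int p - 1) * int N * (int p - 1) + (int p - 1) * int N * int p + (int p - 1) * int N * int K
      + (int p - 1) * (int N * (int N - 1)) * (int p - 1)) * int p ^ (n - 3)" .
  thus ?thesis unfolding pw pw2 iN iK by (simp add: algebra_simps power2_eq_square)
qed

end

theorem lemma4p6:
  fixes n k \<beta> p :: nat
  assumes "n \<ge> 3" and "1 \<le> k" and "k \<le> n - 2" and "\<beta> > 1" and "prime p"
  defines "\<alpha> \<equiv> [3] @ replicate (k - 1) 1 @ [\<beta>] @ replicate (n - k - 2) 1"
  shows "(\<beta> = 2 \<longrightarrow>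
           int (g \<alpha> p) =
             (int n - 1) * int p ^ (2*n - k - 5)
             + (int n - int k - 1) * (int n - 2) * int p ^ (n - 3) * (int p - 1)
             - (int n - int k - 1) * int p ^ (n - 3)
             + ((int n - int k - 2) + int ((n - k - 2) choose 2))
                 * int p ^ (n - 3) * (int p - 2) * (int p - 3))
       \<and> (\<beta> > 2 \<longrightarrow>
           int (g \<alpha> p) =
             (int n - int k - 1) * (int n - 2) * int p ^ (2*n - k - 5)
             + ((int n - int k - 1) * (int k - 1) + 1 + (int n - int k - 2) * (int n - int k - 3))
                 * int p ^ (n - 3) * (int p - 1)
             + (int n - int k - 2) * int p ^ (n - 3) * (int p - 1)^2
             + (int n - int k - 2) * int p ^ (n - 2) * (int p - 1)
             + (int n - int k - 2) * (int n - int k - 3) * int p ^ (n - 3) * (int p - 1) * (int p - 2))"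
proof -
  interpret L n k \<beta> p using assms by (unfold_locales) auto
  have "\<alpha> = al" by (simp add: \<alpha>_def al_def)
  thus ?thesis using main2 main3 by simp
qed

end
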